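(* Let $A$ be a simple finite-dimensional associative superalgebra over an algebraically closed field $\mathbb{K}$ of characteristic zero. Then $A$ admits an even-symmetric structure if and only if $A$ is isomorphic to $M_{r,s}(\mathbb{K})$ for some integers $r\ge 1$, $s\ge 0$. In particular, the field $\mathbb{K}$ (with $\mathbb{K}_{\bar 1}=\{0\}$) is, up to isomorphism, the unique simple associative supercommutative superalgebra admitting an even-symmetric structure.
   Context: A superalgebra is a $\mathbb{Z}_2$-graded algebra $A=A_{\bar 0}\oplus A_{\bar 1}$ with $A_\alpha A_\beta\subseteq A_{\alpha+\beta}$; $|x|$ denotes the degree of a homogeneous element. An associative superalgebra is simple if its product is not identically zero and its only graded two-sided ideals are $\{0\}$ and $A$. It is supercommutative if $xy=(-1)^{|x||y|}yx$ for homogeneous $x,y$. An even-symmetric structure on $A$ is a bilinear form $B$ with $B(A_{\bar 0},A_{\bar 1})=B(A_{\bar 1},A_{\bar 0})=\{0\}$ which is supersymmetric ($B(x,y)=(-1)^{|x||y|}B(y,x)$ for homogeneous $x,y$), associative ($B(xy,z)=B(x,yz)$) and non-degenerate. For $r\ge1$, $s\ge0$, $n=r+s$, $M_{r,s}(\mathbb{K})$ is the matrix algebra $M_n(\mathbb{K})$ with even part the block-diagonal matrices $\begin{pmatrix}a&0\\0&b\end{pmatrix}$, $a\in M_r(\mathbb{K})$, $b\in M_s(\mathbb{K})$, and odd part the block-off-diagonal matrices $\begin{pmatrix}0&c\\d&0\end{pmatrix}$, $c\in M_{r\times s}(\mathbb{K})$, $d\in M_{s\times r}(\mathbb{K})$.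 *)

theory Defs
  imports Main "HOL-Computational_Algebra.Polynomial"
begin

text \<open>A field is algebraically closed if every non-constant polynomial has a root.
  Characteristic zero is expressed by the type class field_char_0.\<close>
definition alg_closed :: "'k::field itself \<Rightarrow> bool" where
  "alg_closed _ \<longleftrightarrow> (\<forall>p :: 'k poly. degree p \<ge> 1 \<longrightarrow> (\<exists>z. poly p z = 0))"

definition superalgebra ::
  "('k::field \<Rightarrow> 'a::ab_group_add \<Rightarrow> 'a) \<Rightarrow> ('a \<Rightarrow> 'a \<Rightarrow> 'a) \<Rightarrow> 'a set \<Rightarrow> 'a set \<Rightarrow> bool" where
  "superalgebra sc mul A0 A1 \<longleftrightarrow>
     vector_space sc \<and>
     (\<forall>x y z. mul (x + y) z = mul x z + mul y z) \<and>
     (\<forall>x y z. mul x (y + z) = mul x y + mul x z) \<and>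
     (\<forall>c x y. mul (sc c x) y = sc c (mul x y)) \<and>
     (\<forall>c x y. mul x (sc c y) = sc c (mul x y)) \<and>
     module.subspace sc A0 \<and> module.subspace sc A1 \<and>
     A0 \<inter> A1 = {0} \<and>
     (\<forall>x. \<exists>u\<in>A0. \<exists>v\<in>A1. x = u + v) \<and>
     (\<forall>x\<in>A0. \<forall>y\<in>A0. mul x y \<in> A0) \<and>
     (\<forall>x\<in>A0. \<forall>y\<in>A1. mul x y \<in> A1) \<and>
     (\<forall>x\<in>A1. \<forall>y\<in>A0. mul x y \<in> A1) \<and>
     (\<forall>x\<in>A1. \<forall>y\<in>A1. mul x y \<in> A0)"

definition associative_mul :: "('a \<Rightarrow> 'a \<Rightarrow> 'a) \<Rightarrow> bool" where
  "associative_mul mul \<longleftrightarrow> (\<forall>x y z. mul (mul x y) z = mul x (mul y z))"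

definition fin_dim :: "('k::field \<Rightarrow> 'a::ab_group_add \<Rightarrow> 'a) \<Rightarrow> bool" where
  "fin_dim sc \<longleftrightarrow> (\<exists>S. finite S \<and> module.span sc S = UNIV)"

definition graded_ideal ::
  "('k::field \<Rightarrow> 'a::ab_group_add \<Rightarrow> 'a) \<Rightarrow> ('a \<Rightarrow> 'a \<Rightarrow> 'a) \<Rightarrow> 'a set \<Rightarrow> 'a set \<Rightarrow> 'a set \<Rightarrow> bool" where
  "graded_ideal sc mul A0 A1 I \<longleftrightarrow>
     module.subspace sc I \<and>
     (\<forall>x\<in>I. \<forall>a. mul a x \<in> I \<and> mul x a \<in> I) \<and>
     (\<forall>x\<in>I. \<exists>u\<in>I \<inter> A0. \<exists>v\<in>I \<inter> A1. x = u + v)"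

definition simple_superalgebra ::
  "('k::field \<Rightarrow> 'a::ab_group_add \<Rightarrow> 'a) \<Rightarrow> ('a \<Rightarrow> 'a \<Rightarrow> 'a) \<Rightarrow> 'a set \<Rightarrow> 'a set \<Rightarrow> bool" where
  "simple_superalgebra sc mul A0 A1 \<longleftrightarrow>
     (\<exists>x y. mul x y \<noteq> 0) \<and>
     (\<forall>I. graded_ideal sc mul A0 A1 I \<longrightarrow> I = {0} \<or> I = UNIV)"

definition supercommutative :: "('a::ab_group_add \<Rightarrow> 'a \<Rightarrow> 'a) \<Rightarrow> 'a set \<Rightarrow> 'a set \<Rightarrow> bool" where
  "supercommutative mul A0 A1 \<longleftrightarrow>
     (\<forall>x\<in>A0. \<forall>y\<in>A0 \<union> A1. mul x y = mul y x) \<and>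
     (\<forall>x\<in>A1. \<forall>y\<in>A1. mul x y = - mul y x)"

definition even_symmetric_structure ::
  "('k::field \<Rightarrow> 'a::ab_group_add \<Rightarrow> 'a) \<Rightarrow> ('a \<Rightarrow> 'a \<Rightarrow> 'a) \<Rightarrow> 'a set \<Rightarrow> 'a set
    \<Rightarrow> ('a \<Rightarrow> 'a \<Rightarrow> 'k) \<Rightarrow> bool" where
  "even_symmetric_structure sc mul A0 A1 B \<longleftrightarrow>
     (\<forall>x y z. B (x + y) z = B x z + B y z) \<and>
     (\<forall>x y z. B x (y + z) = B x y + B x z) \<and>
     (\<forall>c x y. B (sc c x) y = c * B x y) \<and>
     (\<forall>c x y. B x (sc c y) = c * B x y) \<and>
     (\<forall>x\<in>A0. \<forall>y\<in>A1. B x y = 0 \<and> B y x = 0) \<and>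
     (\<forall>x\<in>A0. \<forall>y\<in>A0 \<union> A1. B x y = B y x) \<and>
     (\<forall>x\<in>A1. \<forall>y\<in>A1. B x y = - B y x) \<and>
     (\<forall>x y z. B (mul x y) z = B x (mul y z)) \<and>
     (\<forall>x. (\<forall>y. B x y = 0) \<longrightarrow> x = 0)"

definition admits_ess ::
  "('k::field \<Rightarrow> 'a::ab_group_add \<Rightarrow> 'a) \<Rightarrow> ('a \<Rightarrow> 'a \<Rightarrow> 'a) \<Rightarrow> 'a set \<Rightarrow> 'a set \<Rightarrow> bool" where
  "admits_ess sc mul A0 A1 \<longleftrightarrow> (\<exists>B. even_symmetric_structure sc mul A0 A1 B)"

text \<open>n x n matrices over 'k are represented as functions nat => nat => 'k vanishing
  outside {0..<n} x {0..<n}, where n = r + s.\<close>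
definition mat_carrier :: "nat \<Rightarrow> (nat \<Rightarrow> nat \<Rightarrow> 'k::field) set" where
  "mat_carrier n = {X. \<forall>i j. (n \<le> i \<or> n \<le> j) \<longrightarrow> X i j = 0}"

definition mat_add :: "(nat \<Rightarrow> nat \<Rightarrow> 'k::field) \<Rightarrow> (nat \<Rightarrow> nat \<Rightarrow> 'k) \<Rightarrow> nat \<Rightarrow> nat \<Rightarrow> 'k" where
  "mat_add X Y = (\<lambda>i j. X i j + Y i j)"

definition mat_smult :: "'k::field \<Rightarrow> (nat \<Rightarrow> nat \<Rightarrow> 'k) \<Rightarrow> nat \<Rightarrow> nat \<Rightarrow> 'k" where
  "mat_smult c X = (\<lambda>i j. c * X i j)"

definition mat_mult :: "nat \<Rightarrow> (nat \<Rightarrow> nat \<Rightarrow> 'k::field) \<Rightarrow> (nat \<Rightarrow> nat \<Rightarrow> 'k) \<Rightarrow> nat \<Rightarrow> nat \<Rightarrow> 'k" where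
  "mat_mult n X Y = (\<lambda>i j. \<Sum>k<n. X i k * Y k j)"

text \<open>Even part: block-diagonal; odd part: block-off-diagonal (w.r.t. blocks of size r, s).\<close>
definition mat_even :: "nat \<Rightarrow> nat \<Rightarrow> (nat \<Rightarrow> nat \<Rightarrow> 'k::field) set" where
  "mat_even r s = {X \<in> mat_carrier (r + s). \<forall>i j. (i < r) \<noteq> (j < r) \<longrightarrow> X i j = 0}"

definition mat_odd :: "nat \<Rightarrow> nat \<Rightarrow> (nat \<Rightarrow> nat \<Rightarrow> 'k::field) set" where
  "mat_odd r s = {X \<in> mat_carrier (r + s). \<forall>i j. (i < r) = (j < r) \<longrightarrow> X i j = 0}"

definition iso_Mrs ::
  "('k::field \<Rightarrow> 'a::ab_group_add \<Rightarrow> 'a) \<Rightarrow> ('a \<Rightarrow> 'a \<Rightarrow> 'a) \<Rightarrow> 'a set \<Rightarrow> 'a set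
    \<Rightarrow> nat \<Rightarrow> nat \<Rightarrow> bool" where
  "iso_Mrs sc mul A0 A1 r s \<longleftrightarrow>
     (\<exists>f :: 'a \<Rightarrow> nat \<Rightarrow> nat \<Rightarrow> 'k.
        bij_betw f UNIV (mat_carrier (r + s)) \<and>
        (\<forall>x y. f (x + y) = mat_add (f x) (f y)) \<and>
        (\<forall>c x. f (sc c x) = mat_smult c (f x)) \<and>
        (\<forall>x y. f (mul x y) = mat_mult (r + s) (f x) (f y)) \<and>
        f ` A0 = mat_even r s \<and>
        f ` A1 = mat_odd r s)"

end

theory Submission
  imports Defs
begin

locale salg =
  fixes sc :: "'k::field_char_0 \<Rightarrow> 'a::ab_group_add \<Rightarrow> 'a"
    and mul :: "'a \<Rightarrow> 'a \<Rightarrow> 'a"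
    and A0 A1 :: "'a set"
  assumes sa: "superalgebra sc mul A0 A1"
    and assoc: "associative_mul mul"
begin

sublocale vs: vector_space sc using sa unfolding superalgebra_def by auto

lemma add_mul: "mul (x + y) z = mul x z + mul y z" using sa unfolding superalgebra_def by auto
lemma mul_add: "mul x (y + z) = mul x y + mul x z" using sa unfolding superalgebra_def by auto
lemma sc_mul: "mul (sc c x) y = sc c (mul x y)" using sa unfolding superalgebra_def by auto
lemma mul_sc: "mul x (sc c y) = sc c (mul x y)" using sa unfolding superalgebra_def by auto
lemma massoc: "mul (mul x y) z = mul x (mul y z)" using assoc unfolding associative_mul_def by auto
lemma sub0: "vs.subspace A0" using sa unfolding superalgebra_def by auto
lemma sub1: "vs.subspace A1" using sa unfolding superalgebra_def by auto
lemma inter01: "A0 \<inter> A1 = {0}" using sa unfolding superalgebra_def by auto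
lemma decomp: "\<exists>u\<in>A0. \<exists>v\<in>A1. x = u + v" using sa unfolding superalgebra_def by auto
lemma m00: "x \<in> A0 \<Longrightarrow> y \<in> A0 \<Longrightarrow> mul x y \<in> A0" using sa unfolding superalgebra_def by auto
lemma m01: "x \<in> A0 \<Longrightarrow> y \<in> A1 \<Longrightarrow> mul x y \<in> A1" using sa unfolding superalgebra_def by auto
lemma m10: "x \<in> A1 \<Longrightarrow> y \<in> A0 \<Longrightarrow> mul x y \<in> A1" using sa unfolding superalgebra_def by auto
lemma m11: "x \<in> A1 \<Longrightarrow> y \<in> A1 \<Longrightarrow> mul x y \<in> A0" using sa unfolding superalgebra_def by auto

lemma zero_mul[simp]: "mul 0 x = 0"
  using add_mul[of 0 0 x] by simp
lemma mul_zero[simp]: "mul x 0 = 0"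
  using mul_add[of x 0 0] by simp
lemma neg_mul: "mul (- x) y = - mul x y"
  using add_mul[of x "-x" y] by (simp add: eq_neg_iff_add_eq_0 add.commute)
lemma mul_neg: "mul x (- y) = - mul x y"
  using mul_add[of x y "-y"] by (simp add: eq_neg_iff_add_eq_0 add.commute)
lemma diff_mul: "mul (x - y) z = mul x z - mul y z"
  using add_mul[of x "-y" z] neg_mul by simp
lemma mul_diff: "mul x (y - z) = mul x y - mul x z"
  using mul_add[of x y "-z"] mul_neg by simp
lemma sum_mul: "mul (\<Sum>i\<in>I. f i) z = (\<Sum>i\<in>I. mul (f i) z)"
  by (induction I rule: infinite_finite_induct) (auto simp: add_mul)
lemma mul_sum: "mul z (\<Sum>i\<in>I. f i) = (\<Sum>i\<in>I. mul z (f i))"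
  by (induction I rule: infinite_finite_induct) (auto simp: mul_add)

lemma in01: "x \<in> A0 \<Longrightarrow> x \<in> A1 \<Longrightarrow> x = 0" using inter01 by auto
lemma A0_0[simp]: "0 \<in> A0" using sub0 vs.subspace_0 by blast
lemma A1_0[simp]: "0 \<in> A1" using sub1 vs.subspace_0 by blast
lemma A0_add: "x \<in> A0 \<Longrightarrow> y \<in> A0 \<Longrightarrow> x + y \<in> A0" using sub0 vs.subspace_add by blast
lemma A1_add: "x \<in> A1 \<Longrightarrow> y \<in> A1 \<Longrightarrow> x + y \<in> A1" using sub1 vs.subspace_add by blast
lemma A0_diff: "x \<in> A0 \<Longrightarrow> y \<in> A0 \<Longrightarrow> x - y \<in> A0" using sub0 vs.subspace_diff by blast
lemma A1_diff: "x \<in> A1 \<Longrightarrow> y \<in> A1 \<Longrightarrow> x - y \<in> A1" using sub1 vs.subspace_diff by blast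
lemma A0_sc: "x \<in> A0 \<Longrightarrow> sc c x \<in> A0" using sub0 vs.subspace_scale by blast
lemma A1_sc: "x \<in> A1 \<Longrightarrow> sc c x \<in> A1" using sub1 vs.subspace_scale by blast
lemma A0_sum: "(\<And>i. i \<in> I \<Longrightarrow> f i \<in> A0) \<Longrightarrow> sum f I \<in> A0" using sub0 vs.subspace_sum by blast
lemma A1_sum: "(\<And>i. i \<in> I \<Longrightarrow> f i \<in> A1) \<Longrightarrow> sum f I \<in> A1" using sub1 vs.subspace_sum by blast

lemma split0: "u \<in> A0 \<Longrightarrow> v \<in> A1 \<Longrightarrow> u + v = 0 \<Longrightarrow> u = 0 \<and> v = 0"
proof -
  assume a: "u \<in> A0" "v \<in> A1" "u + v = 0"
  then have "u = - v" by (simp add: eq_neg_iff_add_eq_0 add.commute)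
  then have "u \<in> A1" using a sub1 vs.subspace_neg by fastforce
  then have "u = 0" using a in01 by blast
  then show ?thesis using a by simp
qed

lemma split_uniq: "u \<in> A0 \<Longrightarrow> v \<in> A1 \<Longrightarrow> u' \<in> A0 \<Longrightarrow> v' \<in> A1 \<Longrightarrow> u + v = u' + v' \<Longrightarrow> u = u' \<and> v = v'"
  using split0[of "u - u'" "v - v'"] A0_diff A1_diff by (simp add: algebra_simps)

definition p0 :: "'a \<Rightarrow> 'a" where "p0 x = (SOME u. u \<in> A0 \<and> x - u \<in> A1)"
definition p1 :: "'a \<Rightarrow> 'a" where "p1 x = x - p0 x"

lemma p0p1: "p0 x \<in> A0 \<and> p1 x \<in> A1"
proof -
  obtain u v where "u \<in> A0" "v \<in> A1" "x = u + v" using decomp by blast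
  then have "\<exists>u. u \<in> A0 \<and> x - u \<in> A1" by (intro exI[of _ u]) simp
  then show ?thesis unfolding p0_def p1_def by (rule someI_ex)
qed
lemma p0A0[simp]: "p0 x \<in> A0" using p0p1 by blast
lemma p1A1[simp]: "p1 x \<in> A1" using p0p1 by blast
lemma p01: "p0 x + p1 x = x" unfolding p1_def by simp

lemma p_char: "u \<in> A0 \<Longrightarrow> v \<in> A1 \<Longrightarrow> x = u + v \<Longrightarrow> p0 x = u \<and> p1 x = v"
  using split_uniq[of "p0 x" "p1 x" u v] p01[of x] by auto

lemma p0_add: "p0 (x + y) = p0 x + p0 y" and p1_add: "p1 (x + y) = p1 x + p1 y"
  using p_char[of "p0 x + p0 y" "p1 x + p1 y" "x + y"] A0_add A1_add p01[of x] p01[of y]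
  by (auto simp: algebra_simps)
lemma p0_sc: "p0 (sc c x) = sc c (p0 x)" and p1_sc: "p1 (sc c x) = sc c (p1 x)"
  using p_char[of "sc c (p0 x)" "sc c (p1 x)" "sc c x"] A0_sc A1_sc p01[of x]
  by (auto simp: vs.scale_right_distrib[symmetric])
lemma p0_A0: "x \<in> A0 \<Longrightarrow> p0 x = x" using p_char[of x 0 x] by simp
lemma p1_A0: "x \<in> A0 \<Longrightarrow> p1 x = 0" using p_char[of x 0 x] by simp
lemma p0_A1: "x \<in> A1 \<Longrightarrow> p0 x = 0" using p_char[of 0 x x] by simp
lemma p1_A1: "x \<in> A1 \<Longrightarrow> p1 x = x" using p_char[of 0 x x] by simp


lemma subspaceI: "0 \<in> S \<Longrightarrow> (\<And>x y. x \<in> S \<Longrightarrow> y \<in> S \<Longrightarrow> x + y \<in> S) \<Longrightarrow> (\<And>c x. x \<in> S \<Longrightarrow> sc c x \<in> S) \<Longrightarrow> vs.subspace S"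
  unfolding vs.subspace_def by blast

lemma mul_p_zero_l: "mul a z = 0 \<Longrightarrow> a \<in> A0 \<union> A1 \<Longrightarrow> mul a (p0 z) = 0 \<and> mul a (p1 z) = 0"
proof -
  assume h: "mul a z = 0" "a \<in> A0 \<union> A1"
  have e: "mul a (p0 z) + mul a (p1 z) = 0" using h p01[of z] mul_add by metis
  show ?thesis
  proof (cases "a \<in> A0")
    case True then show ?thesis using split0[OF m00[OF True p0A0] m01[OF True p1A1] e] by simp
  next
    case False then have "a \<in> A1" using h by auto
    then show ?thesis using split0[OF m11[OF _ p1A1] m10[OF _ p0A0], of a a z z] e by (simp add: add.commute)
  qed
qed

lemma mul_p_zero_r: "mul z a = 0 \<Longrightarrow> a \<in> A0 \<union> A1 \<Longrightarrow> mul (p0 z) a = 0 \<and> mul (p1 z) a = 0"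
proof -
  assume h: "mul z a = 0" "a \<in> A0 \<union> A1"
  have e: "mul (p0 z) a + mul (p1 z) a = 0" using h p01[of z] add_mul by metis
  show ?thesis
  proof (cases "a \<in> A0")
    case True then show ?thesis using split0[OF m00[OF p0A0 True] m10[OF p1A1 True] e] by simp
  next
    case False then have "a \<in> A1" using h by auto
    then show ?thesis using split0[OF m11[OF p1A1] m01[OF p0A0], of a a z z] e by (simp add: add.commute)
  qed
qed

lemma hom_zero_l: "(\<And>a. a \<in> A0 \<union> A1 \<Longrightarrow> mul a z = 0) \<Longrightarrow> mul b z = 0"
  using p01[of b] add_mul[of "p0 b" "p1 b" z] by (metis UnI1 UnI2 add.right_neutral p0A0 p1A1)
lemma hom_zero_r: "(\<And>a. a \<in> A0 \<union> A1 \<Longrightarrow> mul z a = 0) \<Longrightarrow> mul z b = 0"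
  using p01[of b] mul_add[of z "p0 b" "p1 b"] by (metis UnI1 UnI2 add.right_neutral p0A0 p1A1)

definition gli :: "'a set \<Rightarrow> bool" where
  "gli I \<longleftrightarrow> vs.subspace I \<and> (\<forall>a. \<forall>x\<in>I. mul a x \<in> I) \<and> (\<forall>x\<in>I. p0 x \<in> I)"

lemma gli_p1: "gli I \<Longrightarrow> x \<in> I \<Longrightarrow> p1 x \<in> I"
  unfolding gli_def p1_def using vs.subspace_diff by blast

lemma graded_idealI:
  assumes "vs.subspace I" "\<And>a x. x \<in> I \<Longrightarrow> mul a x \<in> I" "\<And>a x. x \<in> I \<Longrightarrow> mul x a \<in> I"
    "\<And>x. x \<in> I \<Longrightarrow> p0 x \<in> I"
  shows "graded_ideal sc mul A0 A1 I"
  unfolding graded_ideal_def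
proof (intro conjI ballI allI)
  fix x assume x: "x \<in> I"
  have "p1 x \<in> I" unfolding p1_def using assms(1,4) x vs.subspace_diff by blast
  then show "\<exists>u\<in>I \<inter> A0. \<exists>v\<in>I \<inter> A1. x = u + v" using assms(4)[OF x] p01[of x] by force
qed (use assms in auto)

lemma span_mul_zero1: assumes "\<forall>t\<in>T. mul s t = 0" "y \<in> vs.span T" shows "mul s y = 0"
  using assms(2) by (induction rule: vs.span_induct_alt) (auto simp: mul_add mul_sc assms(1))

lemma span_mul_zero: assumes "\<forall>s\<in>S. \<forall>t\<in>T. mul s t = 0" "x \<in> vs.span S" "y \<in> vs.span T" shows "mul x y = 0"
proof -
  have h: "mul s y = 0" if "s \<in> S" for s using span_mul_zero1[OF _ assms(3)] assms(1) that by blast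
  show ?thesis using assms(2) by (induction rule: vs.span_induct_alt) (auto simp: add_mul sc_mul h)
qed

lemma span_ideal:
  assumes "\<And>g a. g \<in> G \<Longrightarrow> mul a g \<in> vs.span G" "\<And>g a. g \<in> G \<Longrightarrow> mul g a \<in> vs.span G"
    "\<And>g. g \<in> G \<Longrightarrow> p0 g \<in> vs.span G"
  shows "graded_ideal sc mul A0 A1 (vs.span G)"
proof (rule graded_idealI)
  show "vs.subspace (vs.span G)" by (rule vs.subspace_span)
  show "mul a x \<in> vs.span G" if "x \<in> vs.span G" for a x using that
    by (induction rule: vs.span_induct_alt) (auto simp: mul_add mul_sc assms vs.span_add vs.span_scale vs.span_zero)
  show "mul x a \<in> vs.span G" if "x \<in> vs.span G" for a x using that
    by (induction rule: vs.span_induct_alt) (auto simp: add_mul sc_mul assms vs.span_add vs.span_scale vs.span_zero)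
  show "p0 x \<in> vs.span G" if "x \<in> vs.span G" for x using that
    by (induction rule: vs.span_induct_alt)
      (auto simp: p0_add p0_sc assms vs.span_add vs.span_scale vs.span_zero p0_A0)
qed

end

locale salgS = salg +
  assumes simple: "simple_superalgebra sc mul A0 A1"
begin

lemma ideal_triv: "graded_ideal sc mul A0 A1 I \<Longrightarrow> I = {0} \<or> I = UNIV"
  using simple unfolding simple_superalgebra_def by blast
lemma exists_nz: "\<exists>x y. mul x y \<noteq> 0"
  using simple unfolding simple_superalgebra_def by blast

lemma rann: assumes "\<And>a. mul a z = 0" shows "z = 0"
proof -
  let ?I = "{z. \<forall>a. mul a z = 0}"
  have "graded_ideal sc mul A0 A1 ?I"
  proof (rule graded_idealI)
    show "vs.subspace ?I" by (rule subspaceI) (auto simp: mul_add mul_sc)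
    show "mul a x \<in> ?I" if "x \<in> ?I" for a x using that by (auto simp: massoc[symmetric])
    show "mul x a \<in> ?I" if "x \<in> ?I" for a x
    proof -
      have "mul b (mul x a) = 0" for b using that massoc[of b x a] by simp
      then show ?thesis by simp
    qed
    show "p0 x \<in> ?I" if "x \<in> ?I" for x using that mul_p_zero_l hom_zero_l by blast
  qed
  moreover have "?I \<noteq> UNIV" using exists_nz by auto
  ultimately have "?I = {0}" using ideal_triv by blast
  then show ?thesis using assms by blast
qed

lemma lann: assumes "\<And>a. mul z a = 0" shows "z = 0"
proof -
  let ?I = "{z. \<forall>a. mul z a = 0}"
  have "graded_ideal sc mul A0 A1 ?I"
  proof (rule graded_idealI)
    show "vs.subspace ?I" by (rule subspaceI) (auto simp: add_mul sc_mul)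
    show "mul a x \<in> ?I" if "x \<in> ?I" for a x using that by (auto simp: massoc)
    show "mul x a \<in> ?I" if "x \<in> ?I" for a x using that by (auto simp: massoc)
    show "p0 x \<in> ?I" if "x \<in> ?I" for x using that mul_p_zero_r hom_zero_r by blast
  qed
  moreover have "?I \<noteq> UNIV" using exists_nz by auto
  ultimately have "?I = {0}" using ideal_triv by blast
  then show ?thesis using assms by blast
qed

end


locale salgF = salgS sc mul A0 A1 for sc :: "'k::field_char_0 \<Rightarrow> 'a::ab_group_add \<Rightarrow> 'a" and mul A0 A1 +
  assumes fd: "fin_dim sc" and ac: "alg_closed TYPE('k::field_char_0)"
begin

definition Bas where "Bas = (SOME B. finite B \<and> vs.independent B \<and> vs.span B = UNIV)"

lemma Bas: "finite Bas \<and> vs.independent Bas \<and> vs.span Bas = UNIV"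
proof -
  obtain S where S: "finite S" "vs.span S = UNIV" using fd unfolding fin_dim_def by blast
  obtain B where B: "B \<subseteq> S" "vs.independent B" "S \<subseteq> vs.span B"
    using vs.maximal_independent_subset[of S] by blast
  have "vs.span S \<subseteq> vs.span B" using B(3) vs.span_minimal vs.subspace_span by blast
  then have "\<exists>B. finite B \<and> vs.independent B \<and> vs.span B = UNIV"
    using B S finite_subset by (intro exI[of _ B]) auto
  then show ?thesis unfolding Bas_def by (rule someI_ex)
qed

sublocale fd: finite_dimensional_vector_space sc Bas using Bas by unfold_locales auto

lemma indep_bound: "vs.independent S \<Longrightarrow> finite S \<and> card S \<le> card Bas"
  using vs.independent_span_bound[of Bas S] Bas by auto

lemma eigen:

  assumes L: "vs.subspace L" and rL: "\<And>z. z \<in> L \<Longrightarrow> \<rho> z \<in> L"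
    and radd: "\<And>x y. \<rho> (x + y) = \<rho> x + \<rho> y" and rsc: "\<And>c x. \<rho> (sc c x) = sc c (\<rho> x)"
    and z0: "z0 \<in> L" "z0 \<noteq> 0"
  shows "\<exists>\<mu> z. z \<in> L \<and> z \<noteq> 0 \<and> \<rho> z = sc \<mu> z"
proof -
  define N where "N = card Bas"
  have kadd: "(\<rho>^^k) (x + y) = (\<rho>^^k) x + (\<rho>^^k) y" for k x y
    by (induction k) (auto simp: radd)
  have ksc: "(\<rho>^^k) (sc c x) = sc c ((\<rho>^^k) x)" for k c x
    by (induction k) (auto simp: rsc)
  have kL: "z \<in> L \<Longrightarrow> (\<rho>^^k) z \<in> L" for k z
    by (induction k) (auto simp: rL)
  define S where "S q x = (\<Sum>k\<le>N. sc (poly.coeff q k) ((\<rho>^^k) x))" for q x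
  have F1: "S q (x + y) = S q x + S q y" for q x y
    unfolding S_def by (simp add: kadd vs.scale_right_distrib sum.distrib)
  have F2: "S q (sc c x) = sc c (S q x)" for q c x
    unfolding S_def by (simp add: ksc vs.scale_sum_right mult.commute)
  have F3: "S (smult a q) x = sc a (S q x)" for a q x
    unfolding S_def by (simp add: vs.scale_sum_right)
  have F5: "S (p + q) x = S p x + S q x" for p q x
    unfolding S_def by (simp add: vs.scale_left_distrib sum.distrib)
  have F4: "S (pCons 0 q) x = S q (\<rho> x)" if cq0: "poly.coeff q N = 0" and n1: "N \<ge> 1" for q x
  proof -
    obtain M where M: "N = Suc M" using n1 by (cases N) auto
    have "S (pCons 0 q) x = (\<Sum>k\<le>M. sc (poly.coeff q k) ((\<rho>^^(Suc k)) x))"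
      unfolding S_def M by (subst sum.atMost_Suc_shift) simp
    also have "\<dots> = (\<Sum>k\<le>N. sc (poly.coeff q k) ((\<rho>^^k) (\<rho> x)))"
      using cq0 unfolding M by (simp add: funpow_swap1)
    finally show ?thesis unfolding S_def .
  qed
  have main: "z \<in> L \<Longrightarrow> z \<noteq> 0 \<Longrightarrow> p \<noteq> 0 \<Longrightarrow> degree p \<le> N \<Longrightarrow> S p z = 0 \<Longrightarrow>
      \<exists>\<mu> z. z \<in> L \<and> z \<noteq> 0 \<and> \<rho> z = sc \<mu> z" for p z
  proof (induction "degree p" arbitrary: p z rule: less_induct)
    case less
    show ?case
    proof (cases "degree p = 0")
      case True
      then have c: "poly.coeff p k = 0" if "k \<noteq> 0" for k using that coeff_eq_0[of p k] True by simp
      have "S p z = sc (poly.coeff p 0) z"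
        unfolding S_def by (subst sum.remove[of _ 0]) (auto simp: c)
      moreover have "poly.coeff p 0 \<noteq> 0" using less(4) True
        by (metis leading_coeff_0_iff)
      ultimately show ?thesis using less by simp
    next
      case False
      then have "degree p \<ge> 1" by simp
      then obtain \<mu> where "poly p \<mu> = 0" using ac[unfolded alg_closed_def, rule_format, of p] by blast
      then obtain q where q: "p = [:-\<mu>, 1:] * q" using poly_eq_0_iff_dvd by (metis dvdE)
      have qnz: "q \<noteq> 0" using q less(4) by auto
      have dq: "degree p = degree q + 1" using q qnz degree_mult_eq[of "[:-\<mu>, 1:]" q] by simp
      have cq: "poly.coeff q N = 0" using dq less(5) coeff_eq_0[of q N] by simp
      have N1: "N \<ge> 1" using dq less(5) by simp
      have "S p z = S (smult (-\<mu>) q + pCons 0 q) z" using q by simp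
      also have "\<dots> = sc (-\<mu>) (S q z) + S q (\<rho> z)" by (simp only: F5 F3 F4[OF cq N1])
      also have "\<dots> = S q (\<rho> z + sc (-\<mu>) z)" by (simp only: F1 F2 add.commute)
      finally have Sq: "S q (\<rho> z + sc (-\<mu>) z) = 0" using less(6) by simp
      show ?thesis
      proof (cases "\<rho> z + sc (-\<mu>) z = 0")
        case True
        then have "\<rho> z = sc \<mu> z" by (simp add: eq_neg_iff_add_eq_0)
        then show ?thesis using less(2,3) by blast
      next
        case False
        have "\<rho> z + sc (-\<mu>) z \<in> L" using less(2) rL L vs.subspace_add vs.subspace_scale by blast
        then show ?thesis using less(1)[of q] dq less(5) qnz Sq False by auto
      qed
    qed
  qed
  define v where "v k = (\<rho>^^k) z0" for k
  have "\<exists>c. (\<exists>k\<le>N. c k \<noteq> 0) \<and> (\<Sum>k\<le>N. sc (c k) (v k)) = 0"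
  proof (cases "inj_on v {..N}")
    case True
    have cv: "card (v ` {..N}) = Suc N" using True card_image by fastforce
    then have "\<not> vs.independent (v ` {..N})" using indep_bound unfolding N_def by fastforce
    then obtain u where u: "\<exists>w\<in>v ` {..N}. u w \<noteq> 0" "(\<Sum>w\<in>v ` {..N}. sc (u w) w) = 0"
      using vs.dependent_finite[of "v ` {..N}"] by auto
    have "(\<Sum>k\<le>N. sc (u (v k)) (v k)) = 0" using u(2) sum.reindex[OF True, of "\<lambda>w. sc (u w) w"] by simp
    then show ?thesis using u(1) by (intro exI[of _ "\<lambda>k. u (v k)"]) auto
  next
    case False
    then obtain i j where ij: "i \<le> N" "j \<le> N" "i \<noteq> j" "v i = v j" unfolding inj_on_def by auto
    define c where "c k = (if k = i then 1 else if k = j then -1 else (0::'k))" for k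
    have "(\<Sum>k\<le>N. sc (c k) (v k)) = (\<Sum>k\<in>{i,j}. sc (c k) (v k))"
      by (rule sum.mono_neutral_right) (auto simp: c_def ij)
    also have "\<dots> = 0" using ij by (simp add: c_def)
    finally show ?thesis using ij by (intro exI[of _ c]) (auto simp: c_def)
  qed
  then obtain c where c: "\<exists>k\<le>N. c k \<noteq> 0" "(\<Sum>k\<le>N. sc (c k) (v k)) = 0" by blast
  define p where "p = (\<Sum>k\<le>N. monom (c k) k)"
  have cp: "poly.coeff p m = (if m \<le> N then c m else 0)" for m
    unfolding p_def coeff_sum by (auto simp: if_distrib sum.delta)
  have "p \<noteq> 0" using c(1) cp by (metis coeff_0)
  moreover have "degree p \<le> N" by (rule degree_le) (auto simp: cp)
  moreover have "S p z0 = 0" unfolding S_def using c(2) by (simp add: cp v_def)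
  ultimately show ?thesis using main z0 by blast
qed

end


context salg begin

definition Ap :: "bool \<Rightarrow> 'a set" where "Ap b = (if b then A1 else A0)"
definition pp :: "bool \<Rightarrow> 'a \<Rightarrow> 'a" where "pp b = (if b then p1 else p0)"

lemma m_par: "x \<in> Ap b \<Longrightarrow> y \<in> Ap c \<Longrightarrow> mul x y \<in> Ap (b \<noteq> c)"
  unfolding Ap_def using m00 m01 m10 m11 by (cases b; cases c) auto
lemma Ap_cases: "x \<in> Ap b \<Longrightarrow> (x \<in> A0 \<Longrightarrow> \<not> b \<Longrightarrow> P) \<Longrightarrow> (x \<in> A1 \<Longrightarrow> b \<Longrightarrow> P) \<Longrightarrow> P"
  unfolding Ap_def by (cases b) auto
lemma Ap_0[simp]: "0 \<in> Ap b" unfolding Ap_def by simp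
lemma Ap_add: "x \<in> Ap b \<Longrightarrow> y \<in> Ap b \<Longrightarrow> x + y \<in> Ap b" unfolding Ap_def using A0_add A1_add by auto
lemma Ap_diff: "x \<in> Ap b \<Longrightarrow> y \<in> Ap b \<Longrightarrow> x - y \<in> Ap b" unfolding Ap_def using A0_diff A1_diff by auto
lemma Ap_sc: "x \<in> Ap b \<Longrightarrow> sc c x \<in> Ap b" unfolding Ap_def using A0_sc A1_sc by auto
lemma Ap_sum: "(\<And>i. i \<in> I \<Longrightarrow> f i \<in> Ap b) \<Longrightarrow> sum f I \<in> Ap b" unfolding Ap_def by (cases b) (auto intro: A0_sum A1_sum)
lemma Ap_inter: "x \<in> Ap b \<Longrightarrow> x \<in> Ap (\<not> b) \<Longrightarrow> x = 0" unfolding Ap_def using in01 by (cases b) auto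
lemma pp_Ap: "pp b x \<in> Ap b" unfolding Ap_def pp_def by auto
lemma pp_sum: "pp False x + pp True x = x" unfolding pp_def using p01 by simp

lemma p0_mul: "p0 (mul x y) = mul (p0 x) (p0 y) + mul (p1 x) (p1 y)"
  and p1_mul: "p1 (mul x y) = mul (p0 x) (p1 y) + mul (p1 x) (p0 y)"
proof -
  have "mul x y = (mul (p0 x) (p0 y) + mul (p1 x) (p1 y)) + (mul (p0 x) (p1 y) + mul (p1 x) (p0 y))"
  proof -
    have "mul x y = mul (p0 x + p1 x) (p0 y + p1 y)" using p01 by simp
    also have "\<dots> = (mul (p0 x) (p0 y) + mul (p1 x) (p1 y)) + (mul (p0 x) (p1 y) + mul (p1 x) (p0 y))"
      by (simp add: add_mul mul_add algebra_simps)
    finally show ?thesis .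
  qed
  then have "p0 (mul x y) = mul (p0 x) (p0 y) + mul (p1 x) (p1 y) \<and> p1 (mul x y) = mul (p0 x) (p1 y) + mul (p1 x) (p0 y)"
    using p_char[of "mul (p0 x) (p0 y) + mul (p1 x) (p1 y)" "mul (p0 x) (p1 y) + mul (p1 x) (p0 y)" "mul x y"]
      A0_add[OF m00[OF p0A0 p0A0] m11[OF p1A1 p1A1]] A1_add[OF m01[OF p0A0 p1A1] m10[OF p1A1 p0A0]] by blast
  then show "p0 (mul x y) = mul (p0 x) (p0 y) + mul (p1 x) (p1 y)" "p1 (mul x y) = mul (p0 x) (p1 y) + mul (p1 x) (p0 y)" by auto
qed

end

locale salgB = salgF sc mul A0 A1 for sc :: "'k::field_char_0 \<Rightarrow> 'a::ab_group_add \<Rightarrow> 'a" and mul A0 A1 +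
  fixes B :: "'a \<Rightarrow> 'a \<Rightarrow> 'k"
  assumes ess: "even_symmetric_structure sc mul A0 A1 B"
begin

lemma ess_c: "(\<forall>x y z. B (x + y) z = B x z + B y z) \<and>
     (\<forall>x y z. B x (y + z) = B x y + B x z) \<and>
     (\<forall>c x y. B (sc c x) y = c * B x y) \<and>
     (\<forall>c x y. B x (sc c y) = c * B x y) \<and>
     (\<forall>x\<in>A0. \<forall>y\<in>A1. B x y = 0 \<and> B y x = 0) \<and>
     (\<forall>x\<in>A0. \<forall>y\<in>A0 \<union> A1. B x y = B y x) \<and>
     (\<forall>x\<in>A1. \<forall>y\<in>A1. B x y = - B y x) \<and>
     (\<forall>x y z. B (mul x y) z = B x (mul y z)) \<and>
     (\<forall>x. (\<forall>y. B x y = 0) \<longrightarrow> x = 0)"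
  using ess unfolding even_symmetric_structure_def .

lemma B_addl: "B (x + y) z = B x z + B y z" using ess_c[THEN conjunct1] by blast
lemma B_addr: "B x (y + z) = B x y + B x z" using ess_c[THEN conjunct2, THEN conjunct1] by blast
lemma B_scl: "B (sc c x) y = c * B x y" using ess_c[THEN conjunct2, THEN conjunct2, THEN conjunct1] by blast
lemma B_scr: "B x (sc c y) = c * B x y" using ess_c[THEN conjunct2, THEN conjunct2, THEN conjunct2, THEN conjunct1] by blast
lemma B_01: "x \<in> A0 \<Longrightarrow> y \<in> A1 \<Longrightarrow> B x y = 0 \<and> B y x = 0" using ess_c[THEN conjunct2, THEN conjunct2, THEN conjunct2, THEN conjunct2, THEN conjunct1] by blast
lemma B_sym0': "x \<in> A0 \<Longrightarrow> y \<in> A0 \<union> A1 \<Longrightarrow> B x y = B y x" using ess_c[THEN conjunct2, THEN conjunct2, THEN conjunct2, THEN conjunct2, THEN conjunct2, THEN conjunct1] by blast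
lemma B_anti: "x \<in> A1 \<Longrightarrow> y \<in> A1 \<Longrightarrow> B x y = - B y x" using ess_c[THEN conjunct2, THEN conjunct2, THEN conjunct2, THEN conjunct2, THEN conjunct2, THEN conjunct2, THEN conjunct1] by blast
lemma B_assoc: "B (mul x y) z = B x (mul y z)" using ess_c[THEN conjunct2, THEN conjunct2, THEN conjunct2, THEN conjunct2, THEN conjunct2, THEN conjunct2, THEN conjunct2, THEN conjunct1] by blast
lemma B_nondeg: "(\<And>y. B x y = 0) \<Longrightarrow> x = 0" using ess_c[THEN conjunct2, THEN conjunct2, THEN conjunct2, THEN conjunct2, THEN conjunct2, THEN conjunct2, THEN conjunct2, THEN conjunct2] by blast

lemma B_0l[simp]: "B 0 y = 0" using B_addl[of 0 0 y] by simp
lemma B_0r[simp]: "B x 0 = 0" using B_addr[of x 0 0] by simp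

lemma B_sym0: "x \<in> A0 \<Longrightarrow> B x y = B y x"
  using B_sym0'[of x "p0 y"] B_sym0'[of x "p1 y"] p01[of y] B_addl B_addr by (metis UnI1 UnI2 p0A0 p1A1)

lemma B_self_odd: "w \<in> A1 \<Longrightarrow> B w w = 0"
proof -
  assume "w \<in> A1"
  then have "B w w = - B w w" using B_anti by blast
  then have "B w w + B w w = 0" using eq_neg_iff_add_eq_0 by blast
  then have "2 * B w w = 0" by (metis mult_2)
  then show ?thesis by simp
qed

definition Lmin :: "'a set \<Rightarrow> bool" where
  "Lmin L \<longleftrightarrow> gli L \<and> L \<noteq> {0} \<and> (\<forall>I. gli I \<longrightarrow> I \<subseteq> L \<longrightarrow> I = {0} \<or> I = L)"

lemma Lmin_ex: "\<exists>L. Lmin L"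
proof -
  have g: "gli UNIV" unfolding gli_def using vs.subspace_UNIV by auto
  have "UNIV \<noteq> {0::'a}" using exists_nz by auto
  then obtain L where L: "gli L" "L \<noteq> {0}" "\<And>I. gli I \<and> I \<noteq> {0} \<Longrightarrow> vs.dim L \<le> vs.dim I"
    using ex_has_least_nat[of "\<lambda>I. gli I \<and> I \<noteq> {0}" UNIV vs.dim] g by blast
  have "I = {0} \<or> I = L" if "gli I" "I \<subseteq> L" for I
  proof (cases "I = {0}")
    case False
    then have "vs.dim L \<le> vs.dim I" using L(3) that by blast
    then show ?thesis using fd.subspace_dim_equal[of I L] that L(1) unfolding gli_def by blast
  qed simp
  then show ?thesis using L unfolding Lmin_def by blast
qed

definition L where "L = (SOME L. Lmin L)"

lemma L: "Lmin L" unfolding L_def using Lmin_ex someI_ex by metis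
lemma L_gli: "gli L" using L unfolding Lmin_def by blast
lemma L_nz: "L \<noteq> {0}" using L unfolding Lmin_def by blast
lemma L_min: "gli I \<Longrightarrow> I \<subseteq> L \<Longrightarrow> I = {0} \<or> I = L" using L unfolding Lmin_def by blast
lemma L_sub: "vs.subspace L" using L_gli unfolding gli_def by blast
lemma L_left: "x \<in> L \<Longrightarrow> mul a x \<in> L" using L_gli unfolding gli_def by blast
lemma L_p0: "x \<in> L \<Longrightarrow> p0 x \<in> L" using L_gli unfolding gli_def by blast
lemma L_p1: "x \<in> L \<Longrightarrow> p1 x \<in> L" using L_gli gli_p1 by blast
lemma L_0: "0 \<in> L" using L_sub vs.subspace_0 by blast
lemma L_add: "x \<in> L \<Longrightarrow> y \<in> L \<Longrightarrow> x + y \<in> L" using L_sub vs.subspace_add by blast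
lemma L_diff: "x \<in> L \<Longrightarrow> y \<in> L \<Longrightarrow> x - y \<in> L" using L_sub vs.subspace_diff by blast
lemma L_sc: "x \<in> L \<Longrightarrow> sc c x \<in> L" using L_sub vs.subspace_scale by blast
lemma L_sum: "(\<And>i. i \<in> I \<Longrightarrow> f i \<in> L) \<Longrightarrow> sum f I \<in> L" using L_sub vs.subspace_sum by blast
lemma L_ex: "\<exists>z\<in>L. z \<noteq> 0" using L_nz L_0 by blast

lemma ker_even: assumes "w \<in> A0" shows "gli {z\<in>L. mul z w = sc \<mu> z}"
  unfolding gli_def
proof (intro conjI allI ballI)
  show "vs.subspace {z \<in> L. mul z w = sc \<mu> z}"
    by (rule subspaceI) (auto simp: L_0 L_add L_sc add_mul sc_mul vs.scale_right_distrib mult.commute)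
  show "mul a x \<in> {z \<in> L. mul z w = sc \<mu> z}" if "x \<in> {z \<in> L. mul z w = sc \<mu> z}" for a x
    using that by (auto simp: L_left massoc mul_sc)
  show "p0 x \<in> {z \<in> L. mul z w = sc \<mu> z}" if x: "x \<in> {z \<in> L. mul z w = sc \<mu> z}" for x
  proof -
    have "mul (p0 x) w + mul (p1 x) w = sc \<mu> (p0 x) + sc \<mu> (p1 x)"
      using x p01[of x] add_mul vs.scale_right_distrib by (metis (mono_tags, lifting) mem_Collect_eq)
    then have "mul (p0 x) w = sc \<mu> (p0 x)"
      using split_uniq[of "mul (p0 x) w" "mul (p1 x) w" "sc \<mu> (p0 x)" "sc \<mu> (p1 x)"]
        m00[OF p0A0 assms] m10[OF p1A1 assms] A0_sc[OF p0A0] A1_sc[OF p1A1] by blast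
    then show ?thesis using x L_p0 by auto
  qed
qed

lemma ker_odd: assumes "w \<in> A1" shows "gli {z\<in>L. mul z w = 0}"
  unfolding gli_def
proof (intro conjI allI ballI)
  show "vs.subspace {z \<in> L. mul z w = 0}"
    by (rule subspaceI) (auto simp: L_0 L_add L_sc add_mul sc_mul)
  show "mul a x \<in> {z \<in> L. mul z w = 0}" if "x \<in> {z \<in> L. mul z w = 0}" for a x
    using that by (auto simp: L_left massoc)
  show "p0 x \<in> {z \<in> L. mul z w = 0}" if x: "x \<in> {z \<in> L. mul z w = 0}" for x
  proof -
    have "mul (p1 x) w + mul (p0 x) w = 0"
      using x p01[of x] add_mul by (metis (mono_tags, lifting) mem_Collect_eq add.commute)
    then have "mul (p0 x) w = 0"
      using split0 m11[OF p1A1 assms] m01[OF p0A0 assms] by blast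
    then show ?thesis using x L_p0 by auto
  qed
qed

lemma LL_nz: "\<exists>z\<in>L. \<exists>x\<in>L. mul z x \<noteq> 0"
proof (rule ccontr)
  assume "\<not> ?thesis"
  then have LL: "\<And>z x. z \<in> L \<Longrightarrow> x \<in> L \<Longrightarrow> mul z x = 0" by blast
  define G where "G = {mul z a | z a. z \<in> L}"
  have GI: "mul z a \<in> vs.span G" if "z \<in> L" for z a
  proof -
    have "mul z a \<in> G" using that unfolding G_def by blast
    then show ?thesis by (rule vs.span_base)
  qed
  have gi: "graded_ideal sc mul A0 A1 (vs.span G)"
  proof (rule span_ideal)
    show "mul a g \<in> vs.span G" if gG: "g \<in> G" for g a
    proof -
      obtain z b where zb: "g = mul z b" "z \<in> L" using gG unfolding G_def by blast
      have "mul a g = mul (mul a z) b" unfolding zb by (simp add: massoc)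
      then show ?thesis using GI[OF L_left[OF zb(2)]] by simp
    qed
    show "mul g a \<in> vs.span G" if gG: "g \<in> G" for g a
    proof -
      obtain z b where zb: "g = mul z b" "z \<in> L" using gG unfolding G_def by blast
      have "mul g a = mul z (mul b a)" unfolding zb by (simp add: massoc)
      then show ?thesis using GI[OF zb(2)] by simp
    qed
    show "p0 g \<in> vs.span G" if gG: "g \<in> G" for g
    proof -
      obtain z b where zb: "g = mul z b" "z \<in> L" using gG unfolding G_def by blast
      show ?thesis unfolding zb p0_mul by (rule vs.span_add; rule GI) (use zb L_p0 L_p1 in auto)
    qed
  qed
  obtain z where z: "z \<in> L" "z \<noteq> 0" using L_ex by blast
  obtain a where "mul z a \<noteq> 0" using lann z(2) by blast
  then have "vs.span G \<noteq> {0}" using GI[OF z(1)] by blast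
  then have U: "vs.span G = UNIV" using ideal_triv gi by blast
  have "\<forall>s\<in>G. \<forall>t\<in>G. mul s t = 0"
  proof (intro ballI)
    fix s t assume "s \<in> G" "t \<in> G"
    then obtain z a z' a' where st: "s = mul z a" "t = mul z' a'" "z \<in> L" "z' \<in> L" unfolding G_def by blast
    have "mul s t = mul (mul z (mul a z')) a'" unfolding st by (simp add: massoc)
    also have "\<dots> = 0" using LL[OF st(3) L_left[OF st(4)]] by simp
    finally show "mul s t = 0" .
  qed
  then have "mul x y = 0" for x y using span_mul_zero U by blast
  then show False using exists_nz by blast
qed

lemma LL_even: "\<exists>x\<in>L \<inter> A0. \<exists>z\<in>L. mul z x \<noteq> 0"
proof -
  obtain z x where zx: "z \<in> L" "x \<in> L" "mul z x \<noteq> 0" using LL_nz by blast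
  show ?thesis
  proof (cases "mul z (p0 x) = 0")
    case False then show ?thesis using zx L_p0 by auto
  next
    case True
    define x1 where "x1 = p1 x"
    have x1: "x1 \<in> L" "x1 \<in> A1" unfolding x1_def using zx L_p1 by auto
    have zx1: "mul z x1 \<noteq> 0" using True zx p01[of x] mul_add unfolding x1_def by (metis add_0)
    define K where "K = {y\<in>L. mul y x1 = 0}"
    have K: "gli K" "K \<subseteq> L" unfolding K_def using ker_odd[OF x1(2)] by auto
    have "K \<noteq> L" using zx zx1 unfolding K_def by auto
    then have K0: "K = {0}" using L_min K by blast
    have w: "mul x1 x1 \<in> L \<inter> A0" using x1 L_left m11 by auto
    have "mul (mul z x1) (mul x1 x1) \<noteq> 0"
    proof
      assume h: "mul (mul z x1) (mul x1 x1) = 0"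
      have "mul (mul z x1) x1 \<in> K" unfolding K_def using h x1 zx L_left by (simp add: massoc)
      then have "mul (mul z x1) x1 = 0" using K0 by blast
      then have "mul z x1 \<in> K" unfolding K_def using zx(1) x1 L_left by simp
      then show False using K0 zx1 by blast
    qed
    then show ?thesis using w L_left[OF x1(1), of z] by blast
  qed
qed

end


context salgB begin

lemma e_ex: "\<exists>e. e \<in> L \<and> e \<in> A0 \<and> e \<noteq> 0 \<and> (\<forall>z\<in>L. mul z e = z)"
proof -
  obtain x z where xz: "x \<in> L" "x \<in> A0" "z \<in> L" "mul z x \<noteq> 0" using LL_even by blast
  have znz: "z \<noteq> 0" using xz(4) by auto
  obtain \<mu> u where u: "u \<in> L" "u \<noteq> 0" "mul u x = sc \<mu> u"
    using eigen[OF L_sub, of "\<lambda>y. mul y x" z] xz znz L_left by (auto simp: add_mul sc_mul)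
  define K where "K = {y\<in>L. mul y x = sc \<mu> y}"
  have "gli K" "K \<subseteq> L" unfolding K_def using ker_even[OF xz(2)] by auto
  moreover have "K \<noteq> {0}" using u unfolding K_def by auto
  ultimately have KL: "K = L" using L_min by blast
  have mz: "mul y x = sc \<mu> y" if "y \<in> L" for y using that KL unfolding K_def by auto
  have mu: "\<mu> \<noteq> 0" using mz[OF xz(3)] xz(4) by auto
  define e where "e = sc (inverse \<mu>) x"
  have ee: "mul y e = y" if "y \<in> L" for y
    unfolding e_def using mz[OF that] mu by (simp add: mul_sc)
  have "e \<noteq> 0" using ee[OF xz(3)] xz(4) by auto
  moreover have "e \<in> L" "e \<in> A0" unfolding e_def using xz L_sc A0_sc by auto
  ultimately show ?thesis using ee by blast
qed

definition e where "e = (SOME e. e \<in> L \<and> e \<in> A0 \<and> e \<noteq> 0 \<and> (\<forall>z\<in>L. mul z e = z))"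

lemma e: "e \<in> L" "e \<in> A0" "e \<noteq> 0" "\<And>z. z \<in> L \<Longrightarrow> mul z e = z"
  using someI_ex[OF e_ex] unfolding e_def[symmetric] by blast+

lemma ee: "mul e e = e" using e by blast

lemma eae_L: "mul (mul e a) e \<in> L" using L_left e(1) by blast
lemma e_eae: "mul e (mul (mul e a) e) = mul (mul e a) e"
  by (metis massoc ee)

lemma eAe_even: assumes "a \<in> A0" shows "\<exists>c. mul (mul e a) e = sc c e"
proof -
  define w where "w = mul (mul e a) e"
  have w: "w \<in> L" "w \<in> A0" unfolding w_def using eae_L m00 e(2) assms by auto
  obtain \<mu> u where u: "u \<in> L" "u \<noteq> 0" "mul u w = sc \<mu> u"
    using eigen[OF L_sub, of "\<lambda>y. mul y w" e] e w L_left by (auto simp: add_mul sc_mul)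
  define K where "K = {y\<in>L. mul y w = sc \<mu> y}"
  have "gli K" "K \<subseteq> L" unfolding K_def using ker_even[OF w(2)] by auto
  moreover have "K \<noteq> {0}" using u unfolding K_def by auto
  ultimately have KL: "K = L" using L_min by blast
  then have "mul e w = sc \<mu> e" using e(1) unfolding K_def by auto
  then show ?thesis using e_eae unfolding w_def by auto
qed

lemma Bee: "B e e \<noteq> 0"
proof
  assume h: "B e e = 0"
  have "B e y = 0" for y
  proof -
    have "B e (p1 y) = 0" using B_01 e(2) by auto
    moreover have "B e (p0 y) = 0"
    proof -
      obtain c where c: "mul (mul e (p0 y)) e = sc c e" using eAe_even[of "p0 y"] by auto
      have "B e (p0 y) = B (mul e e) (p0 y)" by (simp add: ee)
      also have "\<dots> = B e (mul e (p0 y))" by (rule B_assoc)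
      also have "\<dots> = B (mul e (p0 y)) e" by (rule B_sym0[OF e(2)])
      also have "\<dots> = B e (mul (p0 y) e)" by (rule B_assoc)
      also have "\<dots> = B (mul e e) (mul (p0 y) e)" by (simp add: ee)
      also have "\<dots> = B e (mul e (mul (p0 y) e))" by (rule B_assoc)
      also have "\<dots> = B e (mul (mul e (p0 y)) e)" by (simp add: massoc)
      also have "\<dots> = 0" using c h by (simp add: B_scr)
      finally show ?thesis .
    qed
    ultimately have "B e (p0 y) + B e (p1 y) = 0" by simp
    then show ?thesis using p01[of y] B_addr[of e "p0 y" "p1 y"] by simp
  qed
  then have "e = 0" by (rule B_nondeg)
  then show False using e(3) by simp
qed

lemma eAe_odd: assumes "a \<in> A1" shows "mul (mul e a) e = 0"
proof (rule ccontr)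
  define w where "w = mul (mul e a) e"
  assume wnz: "w \<noteq> 0"
  have w: "w \<in> L" "w \<in> A1" unfolding w_def using eae_L m01 m10 e(2) assms by auto
  define b where "b = mul (mul a e) (mul e a)"
  have b: "b \<in> A0" unfolding b_def using m10 m01 m11 e(2) assms by auto
  have ww: "mul w w = mul (mul e b) e" unfolding w_def b_def by (simp add: massoc)
  obtain c where c: "mul w w = sc c e" using eAe_even[OF b] ww by auto
  have ew: "mul e w = w" unfolding w_def by (rule e_eae)
  have "c * B e e = B e (mul w w)" using c by (simp add: B_scr)
  also have "\<dots> = B (mul e w) w" by (rule B_assoc[symmetric])
  also have "\<dots> = B w w" by (simp add: ew)
  also have "\<dots> = 0" using B_self_odd w(2) by blast
  finally have "c = 0" using Bee by simp
  then have ww0: "mul w w = 0" using c by simp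
  define K where "K = {y\<in>L. mul y w = 0}"
  have "gli K" "K \<subseteq> L" unfolding K_def using ker_odd[OF w(2)] by auto
  moreover have "K \<noteq> {0}" using w ww0 wnz unfolding K_def by auto
  ultimately have KL: "K = L" using L_min by blast
  then have "mul e w = 0" using e(1) unfolding K_def by auto
  then show False using ew wnz by simp
qed

definition pr :: "'a \<Rightarrow> 'k" where "pr z = B z e / B e e"

lemma pr_add: "pr (x + y) = pr x + pr y" unfolding pr_def by (simp add: B_addl add_divide_distrib)
lemma pr_sc: "pr (sc c x) = c * pr x" unfolding pr_def by (simp add: B_scl)
lemma pr_0[simp]: "pr 0 = 0" unfolding pr_def by simp
lemma pr_sum: "pr (sum f I) = (\<Sum>i\<in>I. pr (f i))"
  by (induction I rule: infinite_finite_induct) (auto simp: pr_add)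
lemma pr_diff: "pr (x - y) = pr x - pr y" using pr_add[of "x - y" y] by simp
lemma pr_e: "pr (sc c e) = c" unfolding pr_def using Bee by (simp add: B_scl)

lemma eAe: "mul (mul e a) e = sc (pr (mul (mul e a) e)) e"
proof -
  obtain c where c: "mul (mul e (p0 a)) e = sc c e" using eAe_even[of "p0 a"] by auto
  have "mul (mul e a) e = mul (mul e (p0 a)) e + mul (mul e (p1 a)) e"
    using p01[of a] by (metis add_mul mul_add)
  also have "\<dots> = sc c e" using c eAe_odd[of "p1 a"] by simp
  finally show ?thesis using pr_e by simp
qed

definition R where "R = {y. mul e y = y}"

lemma L_char: "x \<in> L \<longleftrightarrow> mul x e = x" using e L_left by metis
lemma R_mul: "mul e b \<in> R" unfolding R_def by (simp add: massoc[symmetric] ee)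
lemma R_add: "x \<in> R \<Longrightarrow> y \<in> R \<Longrightarrow> x + y \<in> R" unfolding R_def by (simp add: mul_add)
lemma R_diff: "x \<in> R \<Longrightarrow> y \<in> R \<Longrightarrow> x - y \<in> R" unfolding R_def by (simp add: mul_diff)
lemma R_sc: "x \<in> R \<Longrightarrow> sc c x \<in> R" unfolding R_def by (simp add: mul_sc)
lemma R_0: "0 \<in> R" unfolding R_def by simp
lemma R_sum: "(\<And>i. i \<in> I \<Longrightarrow> f i \<in> R) \<Longrightarrow> sum f I \<in> R"
  by (induction I rule: infinite_finite_induct) (auto simp: R_0 R_add)

definition pa :: "'a \<Rightarrow> 'a \<Rightarrow> 'k" where "pa y x = pr (mul y x)"

lemma pair: assumes "y \<in> R" "x \<in> L" shows "mul y x = sc (pa y x) e"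
proof -
  have h: "mul (mul e (mul y x)) e = mul (mul e y) (mul x e)" by (simp add: massoc)
  also have "\<dots> = mul y x" using assms L_char unfolding R_def by simp
  finally have h: "mul (mul e (mul y x)) e = mul y x" .
  show ?thesis using eAe[of "mul y x"] unfolding pa_def h .
qed

lemma pair_par: assumes "y \<in> R" "x \<in> L" "mul y x \<in> A1" shows "pa y x = 0"
proof -
  have "sc (pa y x) e \<in> A1" using pair assms by metis
  moreover have "sc (pa y x) e \<in> A0" using A0_sc e(2) by blast
  ultimately have "sc (pa y x) e = 0" using in01 by blast
  then show ?thesis using e(3) by simp
qed

lemma pa_addl: "pa (x + y) z = pa x z + pa y z" unfolding pa_def by (simp add: add_mul pr_add)
lemma pa_addr: "pa z (x + y) = pa z x + pa z y" unfolding pa_def by (simp add: mul_add pr_add)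
lemma pa_diffl: "pa (x - y) z = pa x z - pa y z" unfolding pa_def by (simp add: diff_mul pr_diff)
lemma pa_diffr: "pa z (x - y) = pa z x - pa z y" unfolding pa_def by (simp add: mul_diff pr_diff)
lemma pa_scl: "pa (sc c x) z = c * pa x z" unfolding pa_def by (simp add: sc_mul pr_sc)
lemma pa_scr: "pa z (sc c x) = c * pa z x" unfolding pa_def by (simp add: mul_sc pr_sc)
lemma pa_suml: "pa (sum f I) z = (\<Sum>i\<in>I. pa (f i) z)" unfolding pa_def by (simp add: sum_mul pr_sum)
lemma pa_sumr: "pa z (sum f I) = (\<Sum>i\<in>I. pa z (f i))" unfolding pa_def by (simp add: mul_sum pr_sum)

lemma P1: assumes "x \<in> L" "x \<noteq> 0" shows "\<exists>b. mul (mul e b) x \<noteq> 0"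
proof (rule ccontr)
  assume "\<not> ?thesis"
  then have h: "\<And>b. mul (mul e b) x = 0" by blast
  define G where "G = {mul (mul a e) b | a b. True}"
  have GI: "mul (mul a e) b \<in> vs.span G" for a b
  proof -
    have "mul (mul a e) b \<in> G" unfolding G_def by blast
    then show ?thesis by (rule vs.span_base)
  qed
  have p0ae: "p0 (mul a e) = mul (p0 a) e" "p1 (mul a e) = mul (p1 a) e" for a
    using p0_mul[of a e] p1_mul[of a e] e(2) p0_A0 p1_A0 by simp_all
  have gi: "graded_ideal sc mul A0 A1 (vs.span G)"
  proof (rule span_ideal)
    show "mul c g \<in> vs.span G" if gG: "g \<in> G" for g c
    proof -
      obtain a b where ab: "g = mul (mul a e) b" using gG unfolding G_def by blast
      have "mul c g = mul (mul (mul c a) e) b" unfolding ab by (simp add: massoc)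
      then show ?thesis using GI by simp
    qed
    show "mul g c \<in> vs.span G" if gG: "g \<in> G" for g c
    proof -
      obtain a b where ab: "g = mul (mul a e) b" using gG unfolding G_def by blast
      have "mul g c = mul (mul a e) (mul b c)" unfolding ab by (simp add: massoc)
      then show ?thesis using GI by simp
    qed
    show "p0 g \<in> vs.span G" if gG: "g \<in> G" for g
    proof -
      obtain a b where ab: "g = mul (mul a e) b" using gG unfolding G_def by blast
      have "p0 g = mul (mul (p0 a) e) (p0 b) + mul (mul (p1 a) e) (p1 b)"
        unfolding ab using p0_mul[of "mul a e" b] p0ae by simp
      then show ?thesis by (simp add: vs.span_add GI)
    qed
  qed
  have "e \<in> vs.span G" using GI[of e e] by (simp add: ee)
  then have "vs.span G \<noteq> {0}" using e(3) by blast
  then have U: "vs.span G = UNIV" using ideal_triv gi by blast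
  have "\<forall>s\<in>G. \<forall>t\<in>{x}. mul s t = 0" unfolding G_def using h by (auto simp: massoc)
  then have "mul c x = 0" for c using span_mul_zero[of G "{x}" c x] U vs.span_base[of x "{x}"] by blast
  then show False using rann assms(2) by blast
qed

lemma P1h: assumes "x \<in> L" "x \<noteq> 0" "x \<in> Ap p" shows "\<exists>y\<in>R. y \<in> Ap p \<and> pa y x = 1"
proof -
  obtain b where b: "mul (mul e b) x \<noteq> 0" using P1 assms by blast
  have eAp: "e \<in> Ap False" unfolding Ap_def using e(2) by simp
  have split: "mul (mul e b) x = mul (mul e (pp p b)) x + mul (mul e (pp (\<not>p) b)) x"
  proof -
    have "mul (mul e b) x = mul (mul e (pp False b)) x + mul (mul e (pp True b)) x"
      by (metis pp_sum mul_add add_mul)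
    then show ?thesis by (cases p) (simp_all add: add.commute)
  qed
  have "mul e (pp (\<not>p) b) \<in> Ap (\<not>p)" using m_par[OF eAp pp_Ap] by simp
  from m_par[OF this assms(3)] have "mul (mul e (pp (\<not>p) b)) x \<in> Ap True" by simp
  then have "mul (mul e (pp (\<not>p) b)) x = 0"
    using pair_par[OF R_mul assms(1)] pair[OF R_mul assms(1)] unfolding Ap_def by simp
  then have nz: "mul (mul e (pp p b)) x \<noteq> 0" using split b by simp
  define y0 where "y0 = mul e (pp p b)"
  have y0: "y0 \<in> R" "y0 \<in> Ap p" unfolding y0_def using R_mul m_par[OF eAp pp_Ap] by auto
  have c: "pa y0 x \<noteq> 0" using nz pair[OF y0(1) assms(1)] unfolding y0_def by auto
  define y where "y = sc (inverse (pa y0 x)) y0"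
  have "y \<in> R" "y \<in> Ap p" "pa y x = 1" unfolding y_def using y0 c R_sc Ap_sc by (auto simp: pa_scl)
  then show ?thesis by blast
qed

end


context salgB begin

definition expand :: "nat \<Rightarrow> (nat \<Rightarrow> 'a) \<Rightarrow> (nat \<Rightarrow> 'a) \<Rightarrow> 'a \<Rightarrow> 'a" where
  "expand k xs ys z = (\<Sum>i<k. sc (pa (ys i) z) (xs i))"

definition GS :: "nat \<Rightarrow> (nat \<Rightarrow> 'a) \<Rightarrow> (nat \<Rightarrow> 'a) \<Rightarrow> (nat \<Rightarrow> bool) \<Rightarrow> bool" where
  "GS k xs ys par \<longleftrightarrow>
    (\<forall>i<k. xs i \<in> L \<and> ys i \<in> R \<and> xs i \<in> Ap (par i) \<and> ys i \<in> Ap (par i)) \<and>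
    (\<forall>i<k. \<forall>j<k. pa (ys i) (xs j) = (if i = j then 1 else 0)) \<and>
    (\<forall>i<k. \<forall>j<k. i \<le> j \<longrightarrow> par i \<longrightarrow> par j) \<and>
    ((\<exists>i<k. par i) \<longrightarrow> (\<forall>z\<in>L \<inter> A0. expand k xs ys z = z))"

lemma expand_add: "expand k xs ys (z + w) = expand k xs ys z + expand k xs ys w"
  unfolding expand_def by (simp add: pa_addr vs.scale_left_distrib sum.distrib)

lemma pa_expand: "pa y (expand k xs ys z) = (\<Sum>i<k. pa (ys i) z * pa y (xs i))"
  unfolding expand_def by (simp add: pa_sumr pa_scr)

lemma pa_0r[simp]: "pa y 0 = 0" unfolding pa_def by simp
lemma pa_0l[simp]: "pa 0 y = 0" unfolding pa_def by simp

lemma delta_sum: assumes "j < (k::nat)" shows "(\<Sum>i<k. f i * (if i = j then 1 else (0::'k))) = f j"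
proof -
  have "(\<Sum>i<k. f i * (if i = j then 1 else (0::'k))) = (\<Sum>i<k. if i = j then f i else 0)"
    by (intro sum.cong) auto
  also have "\<dots> = f j" using assms by (subst sum.delta) auto
  finally show ?thesis .
qed

lemma delta_sum': assumes "j < (k::nat)" shows "(\<Sum>i<k. f i * (if j = i then 1 else (0::'k))) = f j"
proof -
  have "(\<Sum>i<k. f i * (if j = i then 1 else (0::'k))) = (\<Sum>i<k. f i * (if i = j then 1 else (0::'k)))"
    by (intro sum.cong) auto
  then show ?thesis using delta_sum[OF assms] by simp
qed

lemma GS_0: "GS 0 xs ys par" unfolding GS_def by simp

lemma par_term:
  assumes "y \<in> R" "y \<in> Ap p" "x \<in> L" "x \<in> Ap q" "p \<noteq> q"
  shows "pa y x = 0"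
proof -
  have "mul y x \<in> Ap True" using m_par[OF assms(2,4)] assms(5) by simp
  then show ?thesis using pair_par[OF assms(1,3)] unfolding Ap_def by simp
qed

lemma GS_ext:
  assumes gs: "GS k xs ys par" and nc: "\<exists>z\<in>L. expand k xs ys z \<noteq> z"
  shows "\<exists>x y p. GS (Suc k) (xs(k := x)) (ys(k := y)) (par(k := p))"
proof -
  have X: "\<And>i. i < k \<Longrightarrow> xs i \<in> L \<and> ys i \<in> R \<and> xs i \<in> Ap (par i) \<and> ys i \<in> Ap (par i)"
    using gs unfolding GS_def by blast
  have D: "\<And>i j. i < k \<Longrightarrow> j < k \<Longrightarrow> pa (ys i) (xs j) = (if i = j then 1 else 0)"
    using gs unfolding GS_def by blast
  have S: "\<And>i j. i < k \<Longrightarrow> j < k \<Longrightarrow> i \<le> j \<Longrightarrow> par i \<Longrightarrow> par j"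
    using gs unfolding GS_def by blast
  have C: "(\<exists>i<k. par i) \<Longrightarrow> z \<in> L \<Longrightarrow> z \<in> A0 \<Longrightarrow> expand k xs ys z = z" for z
    using gs unfolding GS_def by blast
  define Df where "Df z = z - expand k xs ys z" for z
  have Df_add: "Df (z + w) = Df z + Df w" for z w unfolding Df_def by (simp add: expand_add)
  have expL: "expand k xs ys z \<in> L" for z unfolding expand_def using X by (auto intro!: L_sum L_sc)
  obtain z p where z: "z \<in> L" "z \<in> Ap p" "Df z \<noteq> 0" and zp: "p \<Longrightarrow> \<forall>w\<in>L \<inter> A0. Df w = 0"
  proof (cases "\<exists>w\<in>L \<inter> A0. Df w \<noteq> 0")
    case True
    then obtain w where "w \<in> L" "w \<in> A0" "Df w \<noteq> 0" by blast
    then show ?thesis using that[of w False] unfolding Ap_def by simp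
  next
    case False
    obtain w where w: "w \<in> L" "Df w \<noteq> 0" using nc unfolding Df_def by auto
    have "Df (p0 w) = 0" using False w L_p0 by auto
    then have "Df (p1 w) \<noteq> 0" using Df_add[of "p0 w" "p1 w"] p01[of w] w by simp
    then show ?thesis using that[of "p1 w" True] False w L_p1 unfolding Ap_def by auto
  qed
  define x where "x = Df z"
  have xL: "x \<in> L" unfolding x_def Df_def using z expL L_diff by blast
  have term0: "i < k \<Longrightarrow> sc (pa (ys i) z) (xs i) \<in> Ap p" for i
  proof -
    assume i: "i < k"
    show ?thesis
    proof (cases "par i = p")
      case True
      then have "xs i \<in> Ap p" using X[OF i] by simp
      then show ?thesis by (rule Ap_sc)
    next
      case False
      then have "pa (ys i) z = 0" using par_term[of "ys i" "par i" z p] X[OF i] z by auto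
      then show ?thesis by simp
    qed
  qed
  have xAp: "x \<in> Ap p" unfolding x_def Df_def expand_def using z(2) term0 by (intro Ap_diff Ap_sum) auto
  have xnz: "x \<noteq> 0" unfolding x_def using z by simp
  have pax: "pa (ys j) x = 0" if j: "j < k" for j
  proof -
    have "pa (ys j) (expand k xs ys z) = (\<Sum>i<k. pa (ys i) z * (if j = i then 1 else 0))"
      unfolding pa_expand using D j by (intro sum.cong) auto
    also have "\<dots> = pa (ys j) z" using delta_sum'[OF j] .
    finally show ?thesis unfolding x_def Df_def pa_diffr by simp
  qed
  obtain y0 where y0: "y0 \<in> R" "y0 \<in> Ap p" "pa y0 x = 1" using P1h[OF xL xnz xAp] by blast
  define y where "y = y0 - (\<Sum>i<k. sc (pa y0 (xs i)) (ys i))"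
  have yR: "y \<in> R" unfolding y_def using y0 X by (auto intro!: R_diff R_sum R_sc)
  have termy: "i < k \<Longrightarrow> sc (pa y0 (xs i)) (ys i) \<in> Ap p" for i
  proof -
    assume i: "i < k"
    show ?thesis
    proof (cases "par i = p")
      case True
      then have "ys i \<in> Ap p" using X[OF i] by simp
      then show ?thesis by (rule Ap_sc)
    next
      case False
      then have "pa y0 (xs i) = 0" using par_term[of y0 p "xs i" "par i"] X[OF i] y0 by auto
      then show ?thesis by simp
    qed
  qed
  have yAp: "y \<in> Ap p" unfolding y_def using y0(2) termy by (intro Ap_diff Ap_sum) auto
  have pay: "pa y (xs j) = 0" if j: "j < k" for j
  proof -
    have "pa (\<Sum>i<k. sc (pa y0 (xs i)) (ys i)) (xs j) = (\<Sum>i<k. pa y0 (xs i) * (if i = j then 1 else 0))"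
      unfolding pa_suml pa_scl using D j by (intro sum.cong) auto
    also have "\<dots> = pa y0 (xs j)" using delta_sum[OF j] .
    finally show ?thesis unfolding y_def pa_diffl by simp
  qed
  have payx: "pa y x = 1"
  proof -
    have "pa (\<Sum>i<k. sc (pa y0 (xs i)) (ys i)) x = 0"
      unfolding pa_suml pa_scl using pax by simp
    then show ?thesis unfolding y_def pa_diffl using y0 by simp
  qed
  have pay_exp: "pa y (expand k xs ys w) = 0" for w unfolding pa_expand using pay by (intro sum.neutral) simp
  let ?xs = "xs(k := x)" and ?ys = "ys(k := y)" and ?par = "par(k := p)"
  have expS: "expand (Suc k) ?xs ?ys w = expand k xs ys w + sc (pa y w) x" for w
  proof -
    have "(\<Sum>i<k. sc (pa (?ys i) w) (?xs i)) = (\<Sum>i<k. sc (pa (ys i) w) (xs i))"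
      by (intro sum.cong) auto
    then show ?thesis unfolding expand_def by simp
  qed
  have G1: "\<forall>i<Suc k. ?xs i \<in> L \<and> ?ys i \<in> R \<and> ?xs i \<in> Ap (?par i) \<and> ?ys i \<in> Ap (?par i)"
    using X xL yR xAp yAp by (auto simp: less_Suc_eq)
  have G2: "\<forall>i<Suc k. \<forall>j<Suc k. pa (?ys i) (?xs j) = (if i = j then 1 else 0)"
    using D pax pay payx by (auto simp: less_Suc_eq)
  have noodd: "\<not> par i" if "i < k" "\<not> p" for i
  proof
    assume "par i"
    then have "expand k xs ys z = z" using C[of z] that z unfolding Ap_def by auto
    then show False using z(3) unfolding Df_def by simp
  qed
  have G3: "\<forall>i<Suc k. \<forall>j<Suc k. i \<le> j \<longrightarrow> ?par i \<longrightarrow> ?par j"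
    using S noodd by (auto simp: less_Suc_eq)
  have G4: "(\<exists>i<Suc k. ?par i) \<longrightarrow> (\<forall>w\<in>L \<inter> A0. expand (Suc k) ?xs ?ys w = w)"
  proof (intro impI ballI)
    fix w assume ex: "\<exists>i<Suc k. ?par i" and w: "w \<in> L \<inter> A0"
    have "expand k xs ys w = w"
    proof (cases p)
      case True then show ?thesis using zp w unfolding Df_def by auto
    next
      case False
      then have "\<exists>i<k. par i" using ex by (auto simp: less_Suc_eq)
      then show ?thesis using C w by blast
    qed
    moreover have "pa y w = 0" using pay_exp[of w] calculation by simp
    ultimately show "expand (Suc k) ?xs ?ys w = w" unfolding expS by simp
  qed
  show ?thesis unfolding GS_def using G1 G2 G3 G4 by blast
qed

lemma GS_indep:
  assumes gs: "GS k xs ys par"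
  shows "inj_on xs {..<k} \<and> vs.independent (xs ` {..<k})"
proof -
  have D: "\<And>i j. i < k \<Longrightarrow> j < k \<Longrightarrow> pa (ys i) (xs j) = (if i = j then 1 else 0)"
    using gs unfolding GS_def by blast
  have inj: "inj_on xs {..<k}"
  proof (rule inj_onI)
    fix i j assume "i \<in> {..<k}" "j \<in> {..<k}" "xs i = xs j"
    then show "i = j" using D[of i i] D[of i j] by (auto split: if_splits)
  qed
  have "\<not> vs.dependent (xs ` {..<k})"
  proof
    assume "vs.dependent (xs ` {..<k})"
    then obtain u where u: "\<exists>v\<in>xs ` {..<k}. u v \<noteq> 0" "(\<Sum>v\<in>xs ` {..<k}. sc (u v) v) = 0"
      using vs.dependent_finite[of "xs ` {..<k}"] by auto
    have s: "(\<Sum>i<k. sc (u (xs i)) (xs i)) = 0" using u(2) sum.reindex[OF inj, of "\<lambda>v. sc (u v) v"] by simp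
    have "u (xs j) = 0" if j: "j < k" for j
    proof -
      have "0 = pa (ys j) (\<Sum>i<k. sc (u (xs i)) (xs i))" using s by simp
      also have "\<dots> = (\<Sum>i<k. u (xs i) * (if j = i then 1 else 0))"
        unfolding pa_sumr pa_scr using D j by (intro sum.cong) auto
      also have "\<dots> = u (xs j)" using delta_sum'[OF j] .
      finally show ?thesis by simp
    qed
    then show False using u(1) by auto
  qed
  then show ?thesis using inj by blast
qed

lemma GS_complete: "\<exists>k xs ys par. GS k xs ys par \<and> (\<forall>z\<in>L. expand k xs ys z = z)"
proof (rule ccontr)
  assume nc: "\<not> ?thesis"
  have "\<exists>xs ys par. GS k xs ys par" for k
  proof (induction k)
    case 0 then show ?case using GS_0 by blast
  next
    case (Suc k)
    then obtain xs ys par where g: "GS k xs ys par" by blast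
    then have "\<exists>z\<in>L. expand k xs ys z \<noteq> z" using nc by blast
    then show ?case using GS_ext[OF g] by blast
  qed
  then obtain xs ys par where g: "GS (Suc (card Bas)) xs ys par" by blast
  from GS_indep[OF g] have "card (xs ` {..<Suc (card Bas)}) \<le> card Bas" using indep_bound by blast
  moreover have "card (xs ` {..<Suc (card Bas)}) = Suc (card Bas)" using GS_indep[OF g] card_image by fastforce
  ultimately show False by simp
qed

end


context salgB begin

lemma annL: assumes "\<And>z. z \<in> L \<Longrightarrow> mul d z = 0" shows "d = 0"
proof -
  let ?I = "{d. \<forall>z\<in>L. mul d z = 0}"
  have "graded_ideal sc mul A0 A1 ?I"
  proof (rule graded_idealI)
    show "vs.subspace ?I" by (rule subspaceI) (auto simp: add_mul sc_mul)
    show "mul a x \<in> ?I" if "x \<in> ?I" for a x using that by (simp add: massoc)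
    show "mul x a \<in> ?I" if x: "x \<in> ?I" for a x
    proof -
      have "mul (mul x a) z = 0" if "z \<in> L" for z using x L_left[OF that, of a] by (simp add: massoc)
      then show ?thesis by simp
    qed
    show "p0 x \<in> ?I" if x: "x \<in> ?I" for x
    proof -
      have "mul (p0 x) z = 0" if z: "z \<in> L" for z
      proof -
        have "mul (p0 x) (p0 z) = 0" using mul_p_zero_r[of x "p0 z"] x L_p0[OF z] by simp
        moreover have "mul (p0 x) (p1 z) = 0" using mul_p_zero_r[of x "p1 z"] x L_p1[OF z] by simp
        ultimately show ?thesis using p01[of z] mul_add[of "p0 x" "p0 z" "p1 z"] by simp
      qed
      then show ?thesis by simp
    qed
  qed
  moreover have "e \<notin> ?I"
  proof
    assume "e \<in> ?I"
    then have "mul e e = 0" using e(1) by blast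
    then show False using ee e(3) by simp
  qed
  ultimately have "?I = {0}" using ideal_triv by blast
  then show ?thesis using assms by blast
qed

lemma iso_exists: "\<exists>r s. r \<ge> 1 \<and> iso_Mrs sc mul A0 A1 r s"
proof -
  obtain k xs ys par where gs: "GS k xs ys par" and cpl: "\<And>z. z \<in> L \<Longrightarrow> expand k xs ys z = z"
    using GS_complete by blast
  have XS: "\<And>i. i < k \<Longrightarrow> xs i \<in> L \<and> ys i \<in> R \<and> xs i \<in> Ap (par i) \<and> ys i \<in> Ap (par i)"
    using gs unfolding GS_def by blast
  have D: "\<And>i j. i < k \<Longrightarrow> j < k \<Longrightarrow> pa (ys i) (xs j) = (if i = j then 1 else 0)"
    using gs unfolding GS_def by blast
  have S: "\<And>i j. i < k \<Longrightarrow> j < k \<Longrightarrow> i \<le> j \<Longrightarrow> par i \<Longrightarrow> par j"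
    using gs unfolding GS_def by blast
  define r where "r = (if \<exists>i<k. par i then (LEAST i. i < k \<and> par i) else k)"
  have rk: "r \<le> k"
  proof (cases "\<exists>i<k. par i")
    case True
    then obtain i where "i < k" "par i" by blast
    then have "(LEAST i. i < k \<and> par i) \<le> i" by (intro Least_le) simp
    then show ?thesis unfolding r_def using True \<open>i < k\<close> by simp
  next
    case False then show ?thesis unfolding r_def by auto
  qed
  have rpar: "par i \<longleftrightarrow> r \<le> i" if i: "i < k" for i
  proof (cases "\<exists>i<k. par i")
    case True
    define m where "m = (LEAST i. i < k \<and> par i)"
    have m: "m < k \<and> par m" unfolding m_def using True by (rule LeastI_ex)
    have rm: "r = m" unfolding r_def m_def using True by simp
    show ?thesis
    proof
      assume "par i" then have "m \<le> i" unfolding m_def using i by (intro Least_le) simp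
      then show "r \<le> i" using rm by simp
    next
      assume "r \<le> i" then show "par i" using S[of m i] m i rm by simp
    qed
  next
    case False then show ?thesis using i unfolding r_def by auto
  qed
  have e_exp: "e = (\<Sum>i<k. sc (pa (ys i) e) (xs i))" using cpl[OF e(1)] unfolding expand_def by simp
  have r1: "r \<ge> 1"
  proof (rule ccontr)
    assume "\<not> r \<ge> 1"
    then have r0: "r = 0" by simp
    have "xs i \<in> A1" if "i < k" for i using XS[OF that] rpar[OF that] r0 unfolding Ap_def by simp
    then have "e \<in> A1" by (subst e_exp) (auto intro!: A1_sum A1_sc)
    then show False using e(2,3) in01 by blast
  qed
  define s where "s = k - r"
  have rs: "r + s = k" unfolding s_def using rk by simp
  define f where "f a = (\<lambda>i j. if i < k \<and> j < k then pa (ys i) (mul a (xs j)) else 0)" for a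
  have xL: "i < k \<Longrightarrow> xs i \<in> L" for i using XS by blast
  have yR: "i < k \<Longrightarrow> ys i \<in> R" for i using XS by blast
  have f_car: "f a \<in> mat_carrier k" for a unfolding f_def mat_carrier_def by auto
  have f_add: "f (x + y) = mat_add (f x) (f y)" for x y
    unfolding f_def mat_add_def by (intro ext) (simp add: add_mul pa_addr)
  have f_sc: "f (sc c x) = mat_smult c (f x)" for c x
    unfolding f_def mat_smult_def by (intro ext) (simp add: sc_mul pa_scr)
  have f_mul: "f (mul a b) = mat_mult k (f a) (f b)" for a b
  proof (intro ext)
    fix i j
    show "f (mul a b) i j = mat_mult k (f a) (f b) i j"
    proof (cases "i < k \<and> j < k")
      case True
      have bx: "mul b (xs j) \<in> L" using L_left xL True by blast
      have "mul (mul a b) (xs j) = mul a (expand k xs ys (mul b (xs j)))"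
        using cpl[OF bx] by (simp add: massoc)
      also have "\<dots> = (\<Sum>l<k. sc (pa (ys l) (mul b (xs j))) (mul a (xs l)))"
        unfolding expand_def by (simp add: mul_sum mul_sc)
      finally have "f (mul a b) i j = (\<Sum>l<k. pa (ys l) (mul b (xs j)) * pa (ys i) (mul a (xs l)))"
        unfolding f_def using True by (simp add: pa_sumr pa_scr)
      also have "\<dots> = (\<Sum>l<k. f a i l * f b l j)"
        unfolding f_def using True by (intro sum.cong) auto
      finally show ?thesis unfolding mat_mult_def by simp
    next
      case False
      then have "f a i l * f b l j = 0" for l unfolding f_def by auto
      then have "mat_mult k (f a) (f b) i j = 0" unfolding mat_mult_def by (intro sum.neutral) simp
      moreover have "f (mul a b) i j = 0" unfolding f_def using False by auto
      ultimately show ?thesis by simp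
    qed
  qed
  have f_inj: "inj f"
  proof (rule injI)
    fix a b assume ab: "f a = f b"
    define d where "d = a - b"
    have dx: "mul d (xs j) = 0" if j: "j < k" for j
    proof -
      have dL: "mul d (xs j) \<in> L" using L_left xL j by blast
      have "pa (ys i) (mul d (xs j)) = 0" if i: "i < k" for i
      proof -
        have "f a i j = f b i j" using ab by simp
        then show ?thesis unfolding f_def d_def using i j by (simp add: diff_mul pa_diffr)
      qed
      then have "expand k xs ys (mul d (xs j)) = 0" unfolding expand_def by simp
      then show ?thesis using cpl[OF dL] by simp
    qed
    have "mul d z = 0" if z: "z \<in> L" for z
    proof -
      have "mul d z = mul d (expand k xs ys z)" using cpl[OF z] by simp
      also have "\<dots> = (\<Sum>i<k. sc (pa (ys i) z) (mul d (xs i)))"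
        unfolding expand_def by (simp add: mul_sum mul_sc)
      also have "\<dots> = 0" using dx by simp
      finally show ?thesis .
    qed
    then have "d = 0" by (rule annL)
    then show "a = b" unfolding d_def by simp
  qed
  define g where "g X = (\<Sum>i<k. \<Sum>j<k. sc (X i j) (mul (xs i) (ys j)))" for X :: "nat \<Rightarrow> nat \<Rightarrow> 'k"
  have f_g: "f (g X) = X" if X: "X \<in> mat_carrier k" for X
  proof (intro ext)
    fix i' j'
    show "f (g X) i' j' = X i' j'"
    proof (cases "i' < k \<and> j' < k")
      case True
      have m: "mul (mul (xs i) (ys j)) (xs j') = sc (if j = j' then 1 else 0) (xs i)" if "i < k" "j < k" for i j
      proof -
        have "mul (mul (xs i) (ys j)) (xs j') = mul (xs i) (sc (pa (ys j) (xs j')) e)"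
          using pair[OF yR[OF that(2)] xL[of j']] True by (simp add: massoc)
        also have "\<dots> = sc (pa (ys j) (xs j')) (xs i)" using e(4)[OF xL[OF that(1)]] by (simp add: mul_sc)
        finally show ?thesis using D[of j j'] that True by simp
      qed
      have "f (g X) i' j' = (\<Sum>i<k. \<Sum>j<k. X i j * pa (ys i') (mul (mul (xs i) (ys j)) (xs j')))"
        unfolding f_def g_def using True by (simp add: sum_mul sc_mul pa_sumr pa_scr)
      also have "\<dots> = (\<Sum>i<k. \<Sum>j<k. X i j * ((if j = j' then 1 else 0) * pa (ys i') (xs i)))"
        by (intro sum.cong refl) (simp add: m pa_scr)
      also have "\<dots> = (\<Sum>i<k. X i j' * pa (ys i') (xs i))"
      proof (intro sum.cong refl)
        fix i assume "i \<in> {..<k}"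
        have "(\<Sum>j<k. X i j * ((if j = j' then 1 else 0) * pa (ys i') (xs i)))
             = (\<Sum>j<k. (X i j * pa (ys i') (xs i)) * (if j = j' then 1 else 0))"
          by (intro sum.cong) auto
        also have "\<dots> = X i j' * pa (ys i') (xs i)" using delta_sum[of j' k "\<lambda>j. X i j * pa (ys i') (xs i)"] True by simp
        finally show "(\<Sum>j<k. X i j * ((if j = j' then 1 else 0) * pa (ys i') (xs i))) = X i j' * pa (ys i') (xs i)" .
      qed
      also have "\<dots> = (\<Sum>i<k. X i j' * (if i' = i then 1 else 0))"
        using D True by (intro sum.cong) auto
      also have "\<dots> = X i' j'" using delta_sum'[of i' k "\<lambda>i. X i j'"] True by simp
      finally show ?thesis .
    next
      case False
      then show ?thesis using X unfolding f_def mat_carrier_def by auto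
    qed
  qed
  have g_even: "g X \<in> A0" if X: "X \<in> mat_even r s" for X
    unfolding g_def
  proof (intro A0_sum)
    fix i j assume ij: "i \<in> {..<k}" "j \<in> {..<k}"
    show "sc (X i j) (mul (xs i) (ys j)) \<in> A0"
    proof (cases "X i j = 0")
      case False
      then have "(i < r) = (j < r)" using X unfolding mat_even_def by auto
      then have "par i = par j" using rpar ij by auto
      then have "mul (xs i) (ys j) \<in> Ap False" using m_par[of "xs i" "par i" "ys j" "par j"] XS[of i] XS[of j] ij by auto
      then show ?thesis unfolding Ap_def by (simp add: A0_sc)
    qed simp
  qed
  have g_odd: "g X \<in> A1" if X: "X \<in> mat_odd r s" for X
    unfolding g_def
  proof (intro A1_sum)
    fix i j assume ij: "i \<in> {..<k}" "j \<in> {..<k}"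
    show "sc (X i j) (mul (xs i) (ys j)) \<in> A1"
    proof (cases "X i j = 0")
      case False
      then have "(i < r) \<noteq> (j < r)" using X unfolding mat_odd_def by auto
      then have "par i \<noteq> par j" using rpar ij by auto
      then have "mul (xs i) (ys j) \<in> Ap True" using m_par[of "xs i" "par i" "ys j" "par j"] XS[of i] XS[of j] ij by auto
      then show ?thesis unfolding Ap_def by (simp add: A1_sc)
    qed simp
  qed
  have f_even: "f a \<in> mat_even r s" if a: "a \<in> A0" for a
    unfolding mat_even_def
  proof (intro CollectI conjI allI impI)
    show "f a \<in> mat_carrier (r + s)" using f_car rs by simp
    fix i j assume ij: "(i < r) \<noteq> (j < r)"
    show "f a i j = 0"
    proof (cases "i < k \<and> j < k")
      case True
      then have "par i \<noteq> par j" using rpar ij by auto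
      have "mul a (xs j) \<in> Ap (par j)" using m_par[of a False "xs j" "par j"] a XS True unfolding Ap_def by auto
      then have "pa (ys i) (mul a (xs j)) = 0"
        using par_term[of "ys i" "par i" "mul a (xs j)" "par j"] XS True L_left \<open>par i \<noteq> par j\<close> by auto
      then show ?thesis unfolding f_def by simp
    qed (auto simp: f_def)
  qed
  have f_odd: "f a \<in> mat_odd r s" if a: "a \<in> A1" for a
    unfolding mat_odd_def
  proof (intro CollectI conjI allI impI)
    show "f a \<in> mat_carrier (r + s)" using f_car rs by simp
    fix i j assume ij: "(i < r) = (j < r)"
    show "f a i j = 0"
    proof (cases "i < k \<and> j < k")
      case True
      then have "par i = par j" using rpar ij by auto
      have "mul a (xs j) \<in> Ap (\<not> par j)" using m_par[of a True "xs j" "par j"] a XS True unfolding Ap_def by auto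
      moreover have "ys i \<in> R" "ys i \<in> Ap (par i)" "mul a (xs j) \<in> L" using XS[of i] XS[of j] True L_left by auto
      ultimately have "pa (ys i) (mul a (xs j)) = 0"
        using par_term[of "ys i" "par i" "mul a (xs j)" "\<not> par j"] \<open>par i = par j\<close> by simp
      then show ?thesis unfolding f_def by simp
    qed (auto simp: f_def)
  qed
  have car_even: "(mat_even r s :: (nat \<Rightarrow> nat \<Rightarrow> 'k) set) \<subseteq> mat_carrier k" unfolding mat_even_def using rs by auto
  have car_odd: "(mat_odd r s :: (nat \<Rightarrow> nat \<Rightarrow> 'k) set) \<subseteq> mat_carrier k" unfolding mat_odd_def using rs by auto
  have "f ` A0 = mat_even r s"
  proof
    show "f ` A0 \<subseteq> mat_even r s" using f_even by blast
    show "mat_even r s \<subseteq> f ` A0"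
    proof
      fix X :: "nat \<Rightarrow> nat \<Rightarrow> 'k" assume X: "X \<in> mat_even r s"
      then have "X = f (g X)" using f_g car_even by auto
      then show "X \<in> f ` A0" using g_even[OF X] by blast
    qed
  qed
  moreover have "f ` A1 = mat_odd r s"
  proof
    show "f ` A1 \<subseteq> mat_odd r s" using f_odd by blast
    show "mat_odd r s \<subseteq> f ` A1"
    proof
      fix X :: "nat \<Rightarrow> nat \<Rightarrow> 'k" assume X: "X \<in> mat_odd r s"
      then have "X = f (g X)" using f_g car_odd by auto
      then show "X \<in> f ` A1" using g_odd[OF X] by blast
    qed
  qed
  moreover have "bij_betw f UNIV (mat_carrier (r + s))"
    unfolding bij_betw_def rs
  proof
    show "inj_on f UNIV" using f_inj by simp
    show "range f = mat_carrier k"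
    proof
      show "range f \<subseteq> mat_carrier k" using f_car by blast
      show "mat_carrier k \<subseteq> range f" using f_g by (metis image_eqI subsetI UNIV_I)
    qed
  qed
  ultimately have "iso_Mrs sc mul A0 A1 r s"
    unfolding iso_Mrs_def using f_add f_sc f_mul rs by (intro exI[of _ f]) auto
  then show ?thesis using r1 by blast
qed

end


lemma mat_mult_assoc:
  "mat_mult n (mat_mult n X Y) Z = mat_mult n X (mat_mult n Y Z)"
proof (intro ext)
  fix i j
  have "mat_mult n (mat_mult n X Y) Z i j = (\<Sum>k<n. \<Sum>l<n. X i l * Y l k * Z k j)"
    unfolding mat_mult_def by (simp add: sum_distrib_right)
  also have "\<dots> = (\<Sum>l<n. \<Sum>k<n. X i l * Y l k * Z k j)" by (rule sum.swap)
  also have "\<dots> = mat_mult n X (mat_mult n Y Z) i j"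
    unfolding mat_mult_def by (simp add: sum_distrib_left mult.assoc)
  finally show "mat_mult n (mat_mult n X Y) Z i j = mat_mult n X (mat_mult n Y Z) i j" .
qed

context salg begin

lemma iso_ess:
  assumes iso: "iso_Mrs sc mul A0 A1 r s"
  shows "admits_ess sc mul A0 A1"
proof -
  obtain f :: "'a \<Rightarrow> nat \<Rightarrow> nat \<Rightarrow> 'k" where
    bij: "bij_betw f UNIV (mat_carrier (r + s))" and
    fadd': "\<forall>x y. f (x + y) = mat_add (f x) (f y)" and
    fsc': "\<forall>c x. f (sc c x) = mat_smult c (f x)" and
    fmul': "\<forall>x y. f (mul x y) = mat_mult (r + s) (f x) (f y)" and
    f0: "f ` A0 = mat_even r s" and f1: "f ` A1 = mat_odd r s"
    using iso unfolding iso_Mrs_def by (elim exE conjE) blast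
  note fadd = fadd'[rule_format] and fsc = fsc'[rule_format] and fmul = fmul'[rule_format]
  define n where "n = r + s"
  define sg where "sg i = (if i < r then 1 else - 1 :: 'k)" for i
  define B where "B x y = (\<Sum>i<n. sg i * mat_mult n (f x) (f y) i i)" for x y
  have Bexp: "B x y = (\<Sum>i<n. \<Sum>k<n. sg i * f x i k * f y k i)" for x y
    unfolding B_def mat_mult_def by (simp add: sum_distrib_left mult.assoc)
  have ev: "\<And>x i k. x \<in> A0 \<Longrightarrow> (i < r) \<noteq> (k < r) \<Longrightarrow> f x i k = 0"
    using f0 unfolding mat_even_def by blast
  have od: "\<And>x i k. x \<in> A1 \<Longrightarrow> (i < r) = (k < r) \<Longrightarrow> f x i k = 0"
    using f1 unfolding mat_odd_def by blast
  have swap: "B y x = (\<Sum>i<n. \<Sum>k<n. sg k * f x i k * f y k i)" for x y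
  proof -
    have "B y x = (\<Sum>k<n. \<Sum>i<n. sg k * f y k i * f x i k)" unfolding Bexp by simp
    also have "\<dots> = (\<Sum>i<n. \<Sum>k<n. sg k * f y k i * f x i k)" by (rule sum.swap)
    also have "\<dots> = (\<Sum>i<n. \<Sum>k<n. sg k * f x i k * f y k i)" by (simp add: mult_ac)
    finally show ?thesis .
  qed
  have "even_symmetric_structure sc mul A0 A1 B"
    unfolding even_symmetric_structure_def
  proof (intro conjI allI ballI impI)
    show "B (x + y) z = B x z + B y z" for x y z
      unfolding Bexp fadd mat_add_def by (simp add: algebra_simps sum.distrib)
    show "B x (y + z) = B x y + B x z" for x y z
      unfolding Bexp fadd mat_add_def by (simp add: algebra_simps sum.distrib)
    show "B (sc c x) y = c * B x y" for c x y
      unfolding Bexp fsc mat_smult_def by (simp add: sum_distrib_left mult_ac)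
    show "B x (sc c y) = c * B x y" for c x y
      unfolding Bexp fsc mat_smult_def by (simp add: sum_distrib_left mult_ac)
    show "B x y = 0" if xy: "x \<in> A0" "y \<in> A1" for x y
    proof -
      have h: "f x i k * f y k i = 0" for i k
      proof (cases "(i < r) = (k < r)")
        case True then have "f y k i = 0" using od[OF xy(2), of k i] by simp
        then show ?thesis by simp
      next
        case False then show ?thesis using ev[OF xy(1) False] by simp
      qed
      show ?thesis unfolding Bexp mult.assoc h by simp
    qed
    show "B y x = 0" if xy: "x \<in> A0" "y \<in> A1" for x y
    proof -
      have h: "f y i k * f x k i = 0" for i k
      proof (cases "(i < r) = (k < r)")
        case True then show ?thesis using od[OF xy(2) True] by simp
      next
        case False then have "f x k i = 0" using ev[OF xy(1), of k i] by auto
        then show ?thesis by simp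
      qed
      show ?thesis unfolding Bexp mult.assoc h by simp
    qed
    show "B x y = B y x" if x: "x \<in> A0" and "y \<in> A0 \<union> A1" for x y
    proof -
      have "(\<Sum>i<n. \<Sum>k<n. sg i * f x i k * f y k i) = (\<Sum>i<n. \<Sum>k<n. sg k * f x i k * f y k i)"
      proof (intro sum.cong refl)
        fix i k
        show "sg i * f x i k * f y k i = sg k * f x i k * f y k i"
        proof (cases "(i < r) = (k < r)")
          case True then show ?thesis unfolding sg_def by simp
        next
          case False then show ?thesis using ev[OF x False] by simp
        qed
      qed
      then show ?thesis using Bexp[of x y] swap[of y x] by simp
    qed
    show "B x y = - B y x" if x: "x \<in> A1" "y \<in> A1" for x y
      unfolding swap[of y x] Bexp[of x y]
    proof -
      have "(\<Sum>i<n. \<Sum>k<n. sg i * f x i k * f y k i) = (\<Sum>i<n. \<Sum>k<n. - (sg k * f x i k * f y k i))"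
      proof (intro sum.cong refl)
        fix i k
        show "sg i * f x i k * f y k i = - (sg k * f x i k * f y k i)"
        proof (cases "(i < r) = (k < r)")
          case False then show ?thesis unfolding sg_def by auto
        next
          case True then show ?thesis using od[OF x(1) True] by simp
        qed
      qed
      then show "(\<Sum>i<n. \<Sum>k<n. sg i * f x i k * f y k i) = - (\<Sum>i<n. \<Sum>k<n. sg k * f x i k * f y k i)"
        by (simp add: sum_negf)
    qed
    show "B (mul x y) z = B x (mul y z)" for x y z
      unfolding B_def fmul n_def[symmetric] mat_mult_assoc ..
    show "x = 0" if h: "\<forall>y. B x y = 0" for x
    proof -
      have fx: "f x \<in> mat_carrier n" using bij unfolding bij_betw_def n_def by blast
      have z: "f x i0 j0 = 0" if ij: "i0 < n" "j0 < n" for i0 j0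
      proof -
        define E where "E = (\<lambda>(a::nat) (b::nat). if a = j0 \<and> b = i0 then 1 else (0::'k))"
        have "E \<in> mat_carrier n" unfolding E_def mat_carrier_def using ij by auto
        then have "E \<in> range f" using bij unfolding bij_betw_def n_def by simp
        then obtain y where y: "f y = E" by auto
        have "B x y = (\<Sum>i<n. \<Sum>k<n. if i = i0 \<and> k = j0 then sg i * f x i k else 0)"
          unfolding Bexp y E_def by (intro sum.cong refl) auto
        also have "\<dots> = (\<Sum>i<n. if i = i0 then sg i * f x i j0 else 0)"
          using ij by (intro sum.cong refl) (auto simp: sum.delta)
        also have "\<dots> = sg i0 * f x i0 j0" using ij by (simp add: sum.delta)
        finally have "sg i0 * f x i0 j0 = 0" using h by simp
        moreover have "sg i0 \<noteq> 0" unfolding sg_def by simp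
        ultimately show ?thesis by simp
      qed
      have "f x = f 0"
      proof (intro ext)
        fix i j
        have "f 0 i j = f 0 i j + f 0 i j" using fun_cong[OF fun_cong[OF fadd[of 0 0], of i], of j] unfolding mat_add_def by simp
        then have f0z: "f 0 i j = 0" by simp
        show "f x i j = f 0 i j"
        proof (cases "i < n \<and> j < n")
          case True then show ?thesis using z f0z by simp
        next
          case False then show ?thesis using fx f0z unfolding mat_carrier_def by auto
        qed
      qed
      then show "x = 0" using bij unfolding bij_betw_def inj_on_def by blast
    qed
  qed
  then show ?thesis unfolding admits_ess_def by blast
qed

lemma supercomm_rs:
  assumes iso: "iso_Mrs sc mul A0 A1 r s" and r1: "r \<ge> 1" and scomm: "supercommutative mul A0 A1"
  shows "r = 1 \<and> s = 0"
proof (rule ccontr)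
  assume ne: "\<not> (r = 1 \<and> s = 0)"
  then have n2: "r + s \<ge> 2" using r1 by auto
  obtain f :: "'a \<Rightarrow> nat \<Rightarrow> nat \<Rightarrow> 'k" where
    bij: "bij_betw f UNIV (mat_carrier (r + s))" and
    fadd': "\<forall>x y. f (x + y) = mat_add (f x) (f y)" and
    fsc': "\<forall>c x. f (sc c x) = mat_smult c (f x)" and
    fmul': "\<forall>x y. f (mul x y) = mat_mult (r + s) (f x) (f y)" and
    f0: "f ` A0 = mat_even r s" and f1: "f ` A1 = mat_odd r s"
    using iso unfolding iso_Mrs_def by (elim exE conjE) blast
  note fadd = fadd'[rule_format] and fsc = fsc'[rule_format] and fmul = fmul'[rule_format]
  define E00 where "E00 = (\<lambda>(a::nat) (b::nat). if a = 0 \<and> b = 0 then 1 else (0::'k))"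
  define E01 where "E01 = (\<lambda>(a::nat) (b::nat). if a = 0 \<and> b = 1 then 1 else (0::'k))"
  have "E00 \<in> mat_even r s"
  proof -
    have "E00 \<in> mat_carrier (r + s)" unfolding mat_carrier_def
    proof (intro CollectI allI impI)
      fix i j :: nat assume "r + s \<le> i \<or> r + s \<le> j"
      then have "\<not> (i = 0 \<and> j = 0)" using n2 by auto
      then show "E00 i j = 0" unfolding E00_def by simp
    qed
    moreover have "E00 i j = 0" if "(i < r) \<noteq> (j < r)" for i j
    proof -
      have "\<not> (i = 0 \<and> j = 0)" using that by auto
      then show ?thesis unfolding E00_def by simp
    qed
    ultimately show ?thesis unfolding mat_even_def by blast
  qed
  then have "E00 \<in> f ` A0" using f0 by simp
  then obtain x where x: "x \<in> A0" "f x = E00" by auto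
  have car01: "E01 \<in> mat_carrier (r + s)" unfolding mat_carrier_def
  proof (intro CollectI allI impI)
    fix i j :: nat assume "r + s \<le> i \<or> r + s \<le> j"
    then have "\<not> (i = 0 \<and> j = 1)" using n2 by auto
    then show "E01 i j = 0" unfolding E01_def by simp
  qed
  have "E01 \<in> mat_even r s \<union> mat_odd r s"
  proof (cases "1 < r")
    case True
    have "E01 i j = 0" if "(i < r) \<noteq> (j < r)" for i j
    proof -
      have "\<not> (i = 0 \<and> j = 1)" using that True r1 by auto
      then show ?thesis unfolding E01_def by simp
    qed
    then have "E01 \<in> mat_even r s" unfolding mat_even_def using car01 by blast
    then show ?thesis by blast
  next
    case False
    have "E01 i j = 0" if "(i < r) = (j < r)" for i j
    proof -
      have "\<not> (i = 0 \<and> j = 1)" using that False r1 by auto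
      then show ?thesis unfolding E01_def by simp
    qed
    then have "E01 \<in> mat_odd r s" unfolding mat_odd_def using car01 by blast
    then show ?thesis by blast
  qed
  then have "E01 \<in> f ` (A0 \<union> A1)" using f0 f1 by (simp add: image_Un)
  then obtain y where y: "y \<in> A0 \<union> A1" "f y = E01" by auto
  have "mul x y = mul y x" using scomm x y unfolding supercommutative_def by blast
  then have "f (mul x y) = f (mul y x)" by simp
  then have "mat_mult (r + s) E00 E01 = mat_mult (r + s) E01 E00" unfolding fmul x y .
  moreover have "mat_mult (r + s) E00 E01 0 1 = 1"
  proof -
    have "mat_mult (r + s) E00 E01 0 1 = (\<Sum>k<r + s. if k = 0 then 1 else 0)"
      unfolding mat_mult_def E00_def E01_def by (intro sum.cong refl) auto
    also have "\<dots> = 1" using n2 by (subst sum.delta) auto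
    finally show ?thesis .
  qed
  moreover have "mat_mult (r + s) E01 E00 0 1 = 0"
    unfolding mat_mult_def E00_def E01_def by (intro sum.neutral) auto
  ultimately show False by simp
qed

end

theorem mainTheorem4:
  fixes sc :: "'k::field_char_0 \<Rightarrow> 'a::ab_group_add \<Rightarrow> 'a"
    and mul :: "'a \<Rightarrow> 'a \<Rightarrow> 'a"
    and A0 A1 :: "'a set"
  assumes "alg_closed TYPE('k)"
    and "superalgebra sc mul A0 A1"
    and "associative_mul mul"
    and "fin_dim sc"
    and "simple_superalgebra sc mul A0 A1"
  shows "(admits_ess sc mul A0 A1 \<longleftrightarrow> (\<exists>r s. r \<ge> 1 \<and> iso_Mrs sc mul A0 A1 r s))
       \<and> (supercommutative mul A0 A1 \<longrightarrow> (admits_ess sc mul A0 A1 \<longleftrightarrow> iso_Mrs sc mul A0 A1 1 0))"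
proof -
  interpret salg sc mul A0 A1 using assms(2,3) by unfold_locales
  have fwd: "\<exists>r s. r \<ge> 1 \<and> iso_Mrs sc mul A0 A1 r s" if ad: "admits_ess sc mul A0 A1"
  proof -
    obtain B where B: "even_symmetric_structure sc mul A0 A1 B" using ad unfolding admits_ess_def by blast
    interpret salgB sc mul A0 A1 B
      using assms B by unfold_locales
    show ?thesis by (rule iso_exists)
  qed
  have bwd: "admits_ess sc mul A0 A1" if "iso_Mrs sc mul A0 A1 r s" for r s
    using iso_ess that by blast
  show ?thesis
  proof (intro conjI impI iffI)
    show "\<exists>r s. r \<ge> 1 \<and> iso_Mrs sc mul A0 A1 r s" if "admits_ess sc mul A0 A1" using fwd that by blast
    show "admits_ess sc mul A0 A1" if "\<exists>r s. r \<ge> 1 \<and> iso_Mrs sc mul A0 A1 r s" using bwd that by blast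
    show "iso_Mrs sc mul A0 A1 1 0" if h1: "supercommutative mul A0 A1" and h2: "admits_ess sc mul A0 A1"
    proof -
      obtain r s where rs: "r \<ge> 1" "iso_Mrs sc mul A0 A1 r s" using fwd[OF h2] by blast
      then have "r = 1 \<and> s = 0" using supercomm_rs[OF rs(2) rs(1) h1] by blast
      then show ?thesis using rs by simp
    qed
    show "admits_ess sc mul A0 A1" if "iso_Mrs sc mul A0 A1 1 0" using bwd that by blast
  qed
qed


end
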